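(* Let $L \geq 3$ be an odd integer and set $k = \frac{L-1}{2}$. Fix a discrete memoryless channel $P_{Y|X}\colon \mathcal{X}\to\mathcal{Y}$, a distribution $P_X$ on $\mathcal{X}$, control symbols $x_{\mathsf{A}}, x_{\mathsf{R}} \in \mathcal{X}$, positive integers $M$ and $n_1 < n_2 < \dots < n_L$, and type-I error probabilities $\epsilon^{(i)} \in (0,1)$ for $i \in [k]$. Set $n_0 = 0$ and $n_{L+1} = n_L$, and define $$\beta^{(i)} \triangleq \beta_{\epsilon^{(i)}}\left(P_{Y|X=x_{\mathsf{A}}}^{\,n_{2i}-n_{2i-1}} \,\middle\|\, P_{Y|X=x_{\mathsf{R}}}^{\,n_{2i}-n_{2i-1}}\right), \quad i \in [k],$$ $$p^{(0)} \triangleq 1, \qquad p^{(i)} \triangleq \max\{\epsilon^{(i)}, 1-\beta^{(i)}\}, \quad i \in [k].$$ Then there exists an $(N, L, M, \epsilon)$-VLBF code with feedback times $n_1,\dots,n_L$ satisfying $$N \leq n_2 + \sum_{j=1}^{k} (n_{2j+2}-n_{2j})\left(\mathrm{rcu}\Big(\sum_{i=1}^{j} (n_{2i-1}-n_{2i-2}), M\Big)\big(1-\beta^{(j)}\big) + \epsilon^{(j)}\right)\prod_{i=0}^{j-1} p^{(i)},$$ $$\epsilon \leq \sum_{j=1}^{k} \mathrm{rcu}\Big(\sum_{i=1}^{j} (n_{2i-1}-n_{2i-2}), M\Big)\,\beta^{(j)} \prod_{i=0}^{j-1} p^{(i)} + \mathrm{rcu}\Big(\sum_{i=1}^{k+1}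 (n_{2i-1}-n_{2i-2}), M\Big)\prod_{i=0}^{k} p^{(i)}.$$ (That is, there is a VLBF code with $M$ messages and feedback times $n_1<\dots<n_L$ whose expected decoding time is at most the first right-hand side and whose average error probability is at most the second right-hand side.)
   Context: Notation: $[n]=\{1,\dots,n\}$; $x^n=(x_1,\dots,x_n)$. A discrete memoryless channel (DMC) with finite input alphabet $\mathcal{X}$ and output alphabet $\mathcal{Y}$ is given by a transition kernel $P_{Y|X}$ and acts as $P_{Y^n|X^n}(y^n|x^n)=\prod_{i=1}^n P_{Y|X}(y_i|x_i)$. For $x\in\mathcal{X}$ and an integer $m\ge 1$, $P^{m}_{Y|X=x}$ denotes the product distribution on $\mathcal{Y}^m$ of $m$ i.i.d. outputs with input $x$. VLBF code: Given $\epsilon\in(0,1)$, $N>0$, and positive integers $M$ and $n_1<\dots<n_L$, an $(N,L,M,\epsilon)$ variable-length bursty-feedback (VLBF) code consists of: (1) a common randomness random variable $U$ with finite alphabet $\mathcal{U}$ and distribution $P_U$, known to transmitter and receiver before transmission; (2) encoding functions $\mathsf{f}_n\colon \mathcal{U}\times[M]\times\mathcal{Y}^{h(n-1)}\to\mathcal{X}$, $n=1,\dots,n_L$, where $h(n)\triangleq\max\{t\in\{0,n_1,\dots,n_L\}\colon t\le n\}$, producing channel inputs $X_n=\mathsf{f}_n(U,W,Y^{h(n-1)})$ (so the transmitter learns the past channel outputs only at the times $n_1,\dots,n_L$); (3) a stopping time $\tau\in\{n_1,\dots,n_L\}$ of the filtration generated by $\{U,Y^{n_i}\}_{i=1}^L$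 with $\mathbb{E}[\tau]\le N$; (4) decoding functions $\mathsf{g}_{n_i}\colon\mathcal{U}\times\mathcal{Y}^{n_i}\to[M]$, $i\in[L]$, with estimate $\hat W=\mathsf{g}_\tau(U,Y^\tau)$, such that when the message $W$ is uniform on $[M]$, $\mathbb{P}[\hat W\ne W]\le\epsilon$. RCU function: for integer $n\ge1$ and $M$, with $P_{X^n}=P_X^{n}$ (i.i.d. $P_X$), $$\mathrm{rcu}(n,M)\triangleq\mathbb{E}\left[\min\left\{1,(M-1)\,\mathbb{P}\left[\iota(\bar X^n;Y^n)\ge\iota(X^n;Y^n)\,\middle|\,X^n,Y^n\right]\right\}\right],$$ where $(X^n,\bar X^n,Y^n)$ has joint distribution $P_{X^n}(x^n)P_{X^n}(\bar x^n)P_{Y^n|X^n}(y^n|x^n)$, and $\iota(x^n;y^n)=\log\frac{P_{Y^n|X^n}(y^n|x^n)}{P_{Y^n}(y^n)}$ with $P_{Y^n}$ the output distribution induced by $P_{X^n}$. Binary hypothesis testing: for distributions $P_{\mathsf{A}},P_{\mathsf{R}}$ on a common finite alphabet, a randomized test is a kernel $P_{B|X}$ to $\{\mathsf{A},\mathsf{R}\}$, and $\beta_\epsilon(P_{\mathsf{A}}\|P_{\mathsf{R}})\triangleq\min\{\mathbb{P}[B=\mathsf{A}\mid X\sim P_{\mathsf{R}}]\colon \mathbb{P}[B=\mathsf{R}\mid X\sim P_{\mathsf{A}}]\le\epsilon\}$, the minimum type-II error probability subject to type-I error probability at most $\epsilon$. *)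

theory Defs
  imports "HOL-Analysis.Analysis" "HOL-Library.Extended_Real"
begin

definition seqs :: "nat \<Rightarrow> 'a list set" where
  "seqs m = {xs. length xs = m}"

definition chan_n :: "('x \<Rightarrow> 'y \<Rightarrow> real) \<Rightarrow> 'x list \<Rightarrow> 'y list \<Rightarrow> real" where
  "chan_n W xs ys = prod_list (map2 W xs ys)"

definition chan_pow :: "('x \<Rightarrow> 'y \<Rightarrow> real) \<Rightarrow> 'x \<Rightarrow> 'y list \<Rightarrow> real" where
  "chan_pow W x ys = prod_list (map (W x) ys)"

definition iid :: "('x \<Rightarrow> real) \<Rightarrow> 'x list \<Rightarrow> real" where
  "iid PX xs = prod_list (map PX xs)"

definition out_dist :: "('x::finite \<Rightarrow> 'y \<Rightarrow> real) \<Rightarrow> ('x \<Rightarrow> real) \<Rightarrow> nat \<Rightarrow> 'y list \<Rightarrow> real" where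
  "out_dist W PX n ys = (\<Sum>xs\<in>seqs n. iid PX xs * chan_n W xs ys)"

definition info_dens :: "('x::finite \<Rightarrow> 'y \<Rightarrow> real) \<Rightarrow> ('x \<Rightarrow> real) \<Rightarrow> nat \<Rightarrow> 'x list \<Rightarrow> 'y list \<Rightarrow> ereal" where
  "info_dens W PX n xs ys =
     (let r = chan_n W xs ys / out_dist W PX n ys in if r = 0 then -\<infinity> else ereal (ln r))"

definition rcu :: "('x::finite \<Rightarrow> 'y::finite \<Rightarrow> real) \<Rightarrow> ('x \<Rightarrow> real) \<Rightarrow> nat \<Rightarrow> nat \<Rightarrow> real" where
  "rcu W PX n M =
     (\<Sum>xs\<in>seqs n. \<Sum>ys\<in>seqs n. iid PX xs * chan_n W xs ys *
        min 1 ((real M - 1) *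
          (\<Sum>xb\<in>seqs n. iid PX xb *
             (if info_dens W PX n xb ys \<ge> info_dens W PX n xs ys then 1 else 0))))"

text \<open>beta_eps(PA || PR) on the finite alphabet A; a randomized test is given by
  T a = probability of deciding A (accept) on observation a.\<close>
definition hyp_beta :: "'a set \<Rightarrow> real \<Rightarrow> ('a \<Rightarrow> real) \<Rightarrow> ('a \<Rightarrow> real) \<Rightarrow> real" where
  "hyp_beta A eps PA PR =
     Inf {(\<Sum>a\<in>A. PR a * T a) | T. (\<forall>a\<in>A. 0 \<le> T a \<and> T a \<le> 1) \<and>
                                    (\<Sum>a\<in>A. PA a * (1 - T a)) \<le> eps}"

definition fb_h :: "nat \<Rightarrow> (nat \<Rightarrow> nat) \<Rightarrow> nat \<Rightarrow> nat" where
  "fb_h L n m = Max ({0} \<union> {n i | i. 1 \<le> i \<and> i \<le> L \<and> n i \<le> m})"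

text \<open>Channel input at time j+1: X_{j+1} = f_{j+1}(U, W, Y^{h(j)}).
  The encoder f has arguments (time, u, message, past outputs).\<close>
definition enc_in :: "nat \<Rightarrow> (nat \<Rightarrow> nat) \<Rightarrow> (nat \<Rightarrow> nat \<Rightarrow> nat \<Rightarrow> 'y list \<Rightarrow> 'x)
    \<Rightarrow> nat \<Rightarrow> nat \<Rightarrow> 'y list \<Rightarrow> nat \<Rightarrow> 'x" where
  "enc_in L n f u w ys j = f (Suc j) u w (take (fb_h L n j) ys)"

definition joint_prob :: "('x \<Rightarrow> 'y \<Rightarrow> real) \<Rightarrow> nat \<Rightarrow> (nat \<Rightarrow> nat) \<Rightarrow> nat \<Rightarrow> (nat \<Rightarrow> real)
    \<Rightarrow> (nat \<Rightarrow> nat \<Rightarrow> nat \<Rightarrow> 'y list \<Rightarrow> 'x) \<Rightarrow> nat \<Rightarrow> nat \<Rightarrow> 'y list \<Rightarrow> real" where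
  "joint_prob W L n M PU f u w ys =
     PU u * (1 / real M) * (\<Prod>j<n L. W (enc_in L n f u w ys j) (ys ! j))"

text \<open>Stopping time: a stopping time of the filtration generated by (U, Y^{n_i}) with values
  in {n_1..n_L} is given by stopping rules stop i u y^{n_i} (i in [L]); tau = n_{idx} where
  idx is the first i with stop i u (Y^{n_i}) true, or L if none.\<close>
definition stop_idx :: "nat \<Rightarrow> (nat \<Rightarrow> nat) \<Rightarrow> (nat \<Rightarrow> nat \<Rightarrow> 'y list \<Rightarrow> bool)
    \<Rightarrow> nat \<Rightarrow> 'y list \<Rightarrow> nat" where
  "stop_idx L n stop u ys = (LEAST i. 1 \<le> i \<and> (i = L \<or> stop i u (take (n i) ys)))"

definition exp_tau :: "('x \<Rightarrow> 'y::finite \<Rightarrow> real) \<Rightarrow> nat \<Rightarrow> (nat \<Rightarrow> nat) \<Rightarrow> nat \<Rightarrow> nat set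
    \<Rightarrow> (nat \<Rightarrow> real) \<Rightarrow> (nat \<Rightarrow> nat \<Rightarrow> nat \<Rightarrow> 'y list \<Rightarrow> 'x)
    \<Rightarrow> (nat \<Rightarrow> nat \<Rightarrow> 'y list \<Rightarrow> bool) \<Rightarrow> real" where
  "exp_tau W L n M Us PU f stop =
     (\<Sum>u\<in>Us. \<Sum>w\<in>{1..M}. \<Sum>ys\<in>seqs (n L).
        joint_prob W L n M PU f u w ys * real (n (stop_idx L n stop u ys)))"

definition err_prob :: "('x \<Rightarrow> 'y::finite \<Rightarrow> real) \<Rightarrow> nat \<Rightarrow> (nat \<Rightarrow> nat) \<Rightarrow> nat \<Rightarrow> nat set
    \<Rightarrow> (nat \<Rightarrow> real) \<Rightarrow> (nat \<Rightarrow> nat \<Rightarrow> nat \<Rightarrow> 'y list \<Rightarrow> 'x)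
    \<Rightarrow> (nat \<Rightarrow> nat \<Rightarrow> 'y list \<Rightarrow> bool) \<Rightarrow> (nat \<Rightarrow> nat \<Rightarrow> 'y list \<Rightarrow> nat) \<Rightarrow> real" where
  "err_prob W L n M Us PU f stop g =
     (\<Sum>u\<in>Us. \<Sum>w\<in>{1..M}. \<Sum>ys\<in>seqs (n L).
        joint_prob W L n M PU f u w ys *
        (let i = stop_idx L n stop u ys in if g i u (take (n i) ys) \<noteq> w then 1 else 0))"

text \<open>Well-formedness of the code components: common randomness U with finite alphabet Us and
  distribution PU; decoders g i u y^{n_i} with values in [M].\<close>
definition vlbf_valid :: "nat \<Rightarrow> (nat \<Rightarrow> nat) \<Rightarrow> nat \<Rightarrow> nat set \<Rightarrow> (nat \<Rightarrow> real)
    \<Rightarrow> (nat \<Rightarrow> nat \<Rightarrow> 'y list \<Rightarrow> nat) \<Rightarrow> bool" where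
  "vlbf_valid L n M Us PU g \<longleftrightarrow>
     finite Us \<and> (\<forall>u\<in>Us. 0 \<le> PU u) \<and> (\<Sum>u\<in>Us. PU u) = 1 \<and>
     (\<forall>i\<in>{1..L}. \<forall>u\<in>Us. \<forall>ys. length ys = n i \<longrightarrow> g i u ys \<in> {1..M})"

definition is_vlbf_code :: "('x \<Rightarrow> 'y::finite \<Rightarrow> real) \<Rightarrow> real \<Rightarrow> nat \<Rightarrow> nat \<Rightarrow> real \<Rightarrow> (nat \<Rightarrow> nat)
    \<Rightarrow> nat set \<Rightarrow> (nat \<Rightarrow> real) \<Rightarrow> (nat \<Rightarrow> nat \<Rightarrow> nat \<Rightarrow> 'y list \<Rightarrow> 'x)
    \<Rightarrow> (nat \<Rightarrow> nat \<Rightarrow> 'y list \<Rightarrow> bool) \<Rightarrow> (nat \<Rightarrow> nat \<Rightarrow> 'y list \<Rightarrow> nat) \<Rightarrow> bool" where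
  "is_vlbf_code W N L M eps n Us PU f stop g \<longleftrightarrow>
     vlbf_valid L n M Us PU g \<and>
     exp_tau W L n M Us PU f stop \<le> N \<and>
     err_prob W L n M Us PU f stop g \<le> eps"

end

theory Submission
  imports Defs
begin

lemma seqs_finite: "finite (seqs m :: 'a::finite list set)"
  unfolding seqs_def using finite_lists_length_eq[of "UNIV::'a set" m] by simp

lemma seqs_mem[simp]: "xs \<in> seqs m \<longleftrightarrow> length xs = m"
  by (simp add: seqs_def)

lemma sum_seqs_append:
  fixes F :: "'a list \<Rightarrow> 'b::comm_monoid_add"
  shows "(\<Sum>ys\<in>seqs (a+b). F ys) = (\<Sum>p\<in>seqs a. \<Sum>q\<in>seqs b. F (p@q))"
proof -
  have inj: "inj_on (\<lambda>x. fst x @ snd x) (seqs a \<times> seqs b :: ('a list \<times> 'a list) set)"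
    by (auto simp: inj_on_def)
  have im: "(\<lambda>x. fst x @ snd x) ` (seqs a \<times> seqs b) = (seqs (a+b) :: 'a list set)"
  proof
    show "(\<lambda>x. fst x @ snd x) ` (seqs a \<times> seqs b) \<subseteq> (seqs (a+b) :: 'a list set)" by auto
    show "(seqs (a+b) :: 'a list set) \<subseteq> (\<lambda>x. fst x @ snd x) ` (seqs a \<times> seqs b)"
    proof
      fix y :: "'a list" assume "y \<in> seqs (a+b)"
      then show "y \<in> (\<lambda>x. fst x @ snd x) ` (seqs a \<times> seqs b)"
        by (intro image_eqI[of _ _ "(take a y, drop a y)"]) auto
    qed
  qed
  have bij: "bij_betw (\<lambda>x. fst x @ snd x) (seqs a \<times> seqs b) (seqs (a+b) :: 'a list set)"
    using inj im by (simp add: bij_betw_def)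
  have "(\<Sum>ys\<in>seqs (a+b). F ys) = (\<Sum>x\<in>seqs a \<times> seqs b. F (fst x @ snd x))"
    using sum.reindex_bij_betw[OF bij, of F] by simp
  also have "\<dots> = (\<Sum>p\<in>seqs a. \<Sum>q\<in>seqs b. F (p@q))"
    by (simp add: sum.cartesian_product split_def)
  finally show ?thesis .
qed

lemma sum_seqs_one:
  fixes F :: "'a list \<Rightarrow> 'b::comm_monoid_add"
  shows "(\<Sum>q\<in>seqs 1. F q) = (\<Sum>y\<in>UNIV. F [y])"
proof -
  have "(seqs 1 :: 'a list set) = (\<lambda>y. [y]) ` UNIV"
    by (auto simp: length_Suc_conv)
  moreover have "inj (\<lambda>y::'a. [y])" by (auto simp: inj_def)
  ultimately show ?thesis using sum.reindex[of "\<lambda>y. [y]" UNIV F] by simp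
qed

lemma sum_seqs_Suc:
  fixes F :: "'a list \<Rightarrow> 'b::comm_monoid_add"
  shows "(\<Sum>ys\<in>seqs (Suc m). F ys) = (\<Sum>p\<in>seqs m. \<Sum>y\<in>UNIV. F (p@[y]))"
proof -
  have "(\<Sum>ys\<in>seqs (m+1). F ys) = (\<Sum>p\<in>seqs m. \<Sum>q\<in>seqs 1. F (p@q))"
    by (rule sum_seqs_append)
  also have "\<dots> = (\<Sum>p\<in>seqs m. \<Sum>y\<in>UNIV. F (p@[y]))"
    by (rule sum.cong[OF refl], rule sum_seqs_one)
  finally show ?thesis by simp
qed

lemma sum_prod_kernel:
  fixes Q :: "nat \<Rightarrow> 'a::finite \<Rightarrow> real"
  assumes "\<And>i. (\<Sum>y\<in>UNIV. Q i y) = 1"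
  shows "(\<Sum>ys\<in>seqs m. \<Prod>i<m. Q i (ys!i)) = 1"
proof (induction m)
  case 0
  have "(seqs 0 :: 'a list set) = {[]}" by (auto simp: seqs_def)
  then show ?case by simp
next
  case (Suc m)
  have "(\<Sum>ys\<in>seqs (Suc m). \<Prod>i<Suc m. Q i (ys!i))
      = (\<Sum>p\<in>seqs m. \<Sum>y\<in>UNIV. (\<Prod>i<m. Q i (p!i)) * Q m y)"
    unfolding sum_seqs_Suc
    by (intro sum.cong refl) (auto simp: nth_append intro!: prod.cong)
  also have "\<dots> = (\<Sum>p\<in>seqs m. (\<Prod>i<m. Q i (p!i)))"
    by (simp add: sum_distrib_left[symmetric] assms)
  finally show ?case using Suc by simp
qed

lemma prod_list_map2_nth:
  assumes "length xs = m" "length ys = m"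
  shows "prod_list (map2 f xs ys) = (\<Prod>i<m. f (xs!i) (ys!i))"
  using assms
proof (induction m arbitrary: xs ys)
  case 0 then show ?case by simp
next
  case (Suc m)
  then obtain x xs' y ys' where "xs = x#xs'" "ys = y#ys'" "length xs' = m" "length ys' = m"
    by (metis length_Suc_conv)
  then show ?case using Suc.IH[of xs' ys'] by (simp del: prod.lessThan_Suc add: prod.lessThan_Suc_shift)
qed

lemma prod_list_map_nth:
  assumes "length xs = m"
  shows "prod_list (map f xs) = (\<Prod>i<m. f (xs!i))"
  using assms
proof (induction m arbitrary: xs)
  case 0 then show ?case by simp
next
  case (Suc m)
  then obtain x xs' where "xs = x#xs'" "length xs' = m"
    by (metis length_Suc_conv)
  then show ?case using Suc.IH[of xs'] by (simp del: prod.lessThan_Suc add: prod.lessThan_Suc_shift)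
qed

lemma chan_n_nth: "length xs = m \<Longrightarrow> length ys = m \<Longrightarrow> chan_n W xs ys = (\<Prod>i<m. W (xs!i) (ys!i))"
  unfolding chan_n_def by (rule prod_list_map2_nth)

lemma chan_pow_nth: "length ys = m \<Longrightarrow> chan_pow W x ys = (\<Prod>i<m. W x (ys!i))"
  unfolding chan_pow_def by (rule prod_list_map_nth)

lemma iid_nth: "length xs = m \<Longrightarrow> iid PX xs = (\<Prod>i<m. PX (xs!i))"
  unfolding iid_def by (rule prod_list_map_nth)

lemma chan_n_append: "length xs = length ys \<Longrightarrow>
   chan_n W (xs@xs') (ys@ys') = chan_n W xs ys * chan_n W xs' ys'"
  unfolding chan_n_def by simp

lemma iid_append: "iid PX (xs@ys) = iid PX xs * iid PX ys"
  unfolding iid_def by simp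

lemma chan_n_nonneg: "(\<And>x y. 0 \<le> W x y) \<Longrightarrow> 0 \<le> chan_n W xs ys"
  unfolding chan_n_def by (intro prod_list_nonneg) auto

lemma chan_pow_nonneg: "(\<And>x y. 0 \<le> W x y) \<Longrightarrow> 0 \<le> chan_pow W x ys"
  unfolding chan_pow_def by (intro prod_list_nonneg) auto

lemma iid_nonneg: "(\<And>x. 0 \<le> PX x) \<Longrightarrow> 0 \<le> iid PX xs"
  unfolding iid_def by (intro prod_list_nonneg) auto

lemma sum_chan_n:
  fixes W :: "'x \<Rightarrow> 'y::finite \<Rightarrow> real"
  assumes "\<And>x. (\<Sum>y\<in>UNIV. W x y) = 1" "length xs = m"
  shows "(\<Sum>ys\<in>seqs m. chan_n W xs ys) = 1"
proof -
  have "(\<Sum>ys\<in>seqs m. chan_n W xs ys) = (\<Sum>ys\<in>seqs m. \<Prod>i<m. W (xs!i) (ys!i))"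
    using assms(2) by (intro sum.cong refl chan_n_nth) auto
  also have "\<dots> = 1" by (rule sum_prod_kernel) (simp add: assms(1))
  finally show ?thesis .
qed

lemma sum_chan_pow:
  fixes W :: "'x \<Rightarrow> 'y::finite \<Rightarrow> real"
  assumes "\<And>x. (\<Sum>y\<in>UNIV. W x y) = 1"
  shows "(\<Sum>ys\<in>seqs m. chan_pow W x ys) = 1"
proof -
  have "(\<Sum>ys\<in>seqs m. chan_pow W x ys) = (\<Sum>ys\<in>seqs m. \<Prod>i<m. W x (ys!i))"
    by (intro sum.cong refl chan_pow_nth) auto
  also have "\<dots> = 1" by (rule sum_prod_kernel) (simp add: assms(1))
  finally show ?thesis .
qed

lemma sum_iid:
  fixes PX :: "'x::finite \<Rightarrow> real"
  assumes "(\<Sum>x\<in>UNIV. PX x) = 1"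
  shows "(\<Sum>xs\<in>seqs m. iid PX xs) = 1"
proof -
  have "(\<Sum>xs\<in>seqs m. iid PX xs) = (\<Sum>xs\<in>seqs m. \<Prod>i<m. PX (xs!i))"
    by (intro sum.cong refl iid_nth) auto
  also have "\<dots> = 1" by (rule sum_prod_kernel) (simp add: assms(1))
  finally show ?thesis .
qed

lemma sum_iid_take:
  fixes PX :: "'x::finite \<Rightarrow> real"
  assumes "(\<Sum>x\<in>UNIV. PX x) = 1" "s \<le> S"
  shows "(\<Sum>c\<in>seqs S. iid PX c * G (take s c)) = (\<Sum>c\<in>seqs s. iid PX c * G c)"
proof -
  have "(\<Sum>c\<in>seqs S. iid PX c * G (take s c)) = (\<Sum>c\<in>seqs (s + (S-s)). iid PX c * G (take s c))"
    using assms(2) by simp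
  also have "\<dots> = (\<Sum>p\<in>seqs s. \<Sum>q\<in>seqs (S-s). iid PX p * G p * iid PX q)"
    unfolding sum_seqs_append by (intro sum.cong refl) (simp add: iid_append)
  also have "\<dots> = (\<Sum>p\<in>seqs s. iid PX p * G p)"
    by (simp add: sum_distrib_left[symmetric] sum_iid[OF assms(1)])
  finally show ?thesis .
qed


definition PP :: "('x \<Rightarrow> 'y \<Rightarrow> real) \<Rightarrow> nat \<Rightarrow> (nat \<Rightarrow> nat) \<Rightarrow> (nat \<Rightarrow> 'u \<Rightarrow> nat \<Rightarrow> 'y list \<Rightarrow> 'x)
   \<Rightarrow> 'u \<Rightarrow> nat \<Rightarrow> nat \<Rightarrow> 'y list \<Rightarrow> real" where
  "PP W L n f u w m ys = (\<Prod>j<m. W (f (Suc j) u w (take (fb_h L n j) ys)) (ys!j))"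

lemma prod_lessThan_add: "(\<Prod>j<a+b. f j) = (\<Prod>j<a. f j) * (\<Prod>i<b. f (a+i))"
  for f :: "nat \<Rightarrow> 'a::comm_monoid_mult"
  by (induction b) (simp_all add: mult.assoc)

lemma sum_lessThan_add: "(\<Sum>j<a+b. f j) = (\<Sum>j<a. f j) + (\<Sum>i<b. f (a+i))"
  for f :: "nat \<Rightarrow> 'a::comm_monoid_add"
  by (induction b) (simp_all add: add.assoc)

lemma fb_h_le: "fb_h L n j \<le> j"
proof -
  have fin: "finite ({0} \<union> {n i | i. 1 \<le> i \<and> i \<le> L \<and> n i \<le> j})"
    by (rule finite_UnI) (auto intro: finite_subset[of _ "n ` {1..L}"])
  show ?thesis unfolding fb_h_def using fin by (subst Max_le_iff) auto
qed

lemma PP_take: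
  assumes "m \<le> length ys"
  shows "PP W L n f u w m ys = PP W L n f u w m (take m ys)"
  unfolding PP_def
proof (intro prod.cong refl)
  fix j assume "j \<in> {..<m}"
  then have j: "j < m" by simp
  have "take (fb_h L n j) (take m ys) = take (fb_h L n j) ys"
    using fb_h_le[of L n j] j by (simp add: min_def)
  moreover have "take m ys ! j = ys ! j" using j by simp
  ultimately show "W (f (Suc j) u w (take (fb_h L n j) ys)) (ys ! j) =
         W (f (Suc j) u w (take (fb_h L n j) (take m ys))) (take m ys ! j)" by simp
qed

lemma PP_append:
  assumes "length p = a" "length q = b"
  shows "PP W L n f u w (a+b) (p@q) = PP W L n f u w a p *
     (\<Prod>i<b. W (f (Suc (a+i)) u w (take (fb_h L n (a+i)) (p@q))) (q!i))"
proof -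
  have "PP W L n f u w (a+b) (p@q) = (\<Prod>j<a. W (f (Suc j) u w (take (fb_h L n j) (p@q))) ((p@q)!j)) *
     (\<Prod>i<b. W (f (Suc (a+i)) u w (take (fb_h L n (a+i)) (p@q))) ((p@q)!(a+i)))"
    unfolding PP_def by (rule prod_lessThan_add)
  moreover have "(\<Prod>j<a. W (f (Suc j) u w (take (fb_h L n j) (p@q))) ((p@q)!j)) = PP W L n f u w a p"
    unfolding PP_def
  proof (intro prod.cong refl)
    fix j assume "j \<in> {..<a}"
    then have j: "j < a" by simp
    have e1: "take (fb_h L n j) (p@q) = take (fb_h L n j) p"
      using fb_h_le[of L n j] j assms by simp
    have e2: "(p@q)!j = p!j" using j assms by (simp add: nth_append)
    show "W (f (Suc j) u w (take (fb_h L n j) (p @ q))) ((p @ q) ! j) =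
          W (f (Suc j) u w (take (fb_h L n j) p)) (p ! j)" by (simp only: e1 e2)
  qed
  moreover have "(p@q)!(a+i) = q!i" for i using assms by (simp add: nth_append)
  ultimately show ?thesis by simp
qed

lemma PP_marginal:
  fixes W :: "'x \<Rightarrow> 'y::finite \<Rightarrow> real"
  assumes Wsum: "\<And>x. (\<Sum>y\<in>UNIV. W x y) = 1"
  shows "(\<Sum>ys\<in>seqs (m+r). PP W L n f u w (m+r) ys * G (take m ys)) = (\<Sum>p\<in>seqs m. PP W L n f u w m p * G p)"
proof (induction r)
  case 0
  show ?case by (intro sum.cong refl) auto
next
  case (Suc r)
  have "(\<Sum>ys\<in>seqs (m+Suc r). PP W L n f u w (m+Suc r) ys * G (take m ys))
     = (\<Sum>p\<in>seqs (m+r). \<Sum>y\<in>UNIV. PP W L n f u w (m+r+1) (p@[y]) * G (take m (p@[y])))"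
    by (simp add: sum_seqs_Suc)
  also have "\<dots> = (\<Sum>p\<in>seqs (m+r). \<Sum>y\<in>UNIV. (PP W L n f u w (m+r) p * G (take m p)) *
         W (f (Suc (m+r)) u w (take (fb_h L n (m+r)) p)) y)"
  proof (intro sum.cong refl)
    fix p :: "'y list" and y :: 'y assume p: "p \<in> seqs (m+r)"
    have "PP W L n f u w (m+r+1) (p@[y]) = PP W L n f u w (m+r) p *
       (\<Prod>i<1. W (f (Suc (m+r+i)) u w (take (fb_h L n (m+r+i)) (p@[y]))) ([y]!i))"
      using PP_append[of p "m+r" "[y]" 1] p by simp
    also have "\<dots> = PP W L n f u w (m+r) p * W (f (Suc (m+r)) u w (take (fb_h L n (m+r)) p)) y"
      using fb_h_le[of L n "m+r"] p by simp
    finally show "PP W L n f u w (m + r + 1) (p @ [y]) * G (take m (p @ [y])) =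
         PP W L n f u w (m + r) p * G (take m p) * W (f (Suc (m + r)) u w (take (fb_h L n (m + r)) p)) y"
      using p by simp
  qed
  also have "\<dots> = (\<Sum>p\<in>seqs (m+r). PP W L n f u w (m+r) p * G (take m p))"
    by (simp add: sum_distrib_left[symmetric] Wsum)
  finally show ?case using Suc by simp
qed

lemma PP_nonneg: "(\<And>x y. 0 \<le> W x y) \<Longrightarrow> 0 \<le> PP W L n f u w m ys"
  unfolding PP_def by (intro prod_nonneg) auto


locale scheme =
  fixes W :: "'x::finite \<Rightarrow> 'y::finite \<Rightarrow> real"
    and PX :: "'x \<Rightarrow> real"
    and xA xR :: 'x
    and L M :: nat
    and n :: "nat \<Rightarrow> nat"
    and eps :: "nat \<Rightarrow> real"
    and T :: "nat \<Rightarrow> 'y list \<Rightarrow> real"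
  assumes L: "odd L" "L \<ge> 3"
    and W_nonneg: "\<And>x y. 0 \<le> W x y"
    and W_sum: "\<And>x. (\<Sum>y\<in>UNIV. W x y) = 1"
    and PX_nonneg: "\<And>x. 0 \<le> PX x"
    and PX_sum: "(\<Sum>x\<in>UNIV. PX x) = 1"
    and M: "M \<ge> 1"
    and n_pos: "n 1 \<ge> 1"
    and n_mono: "\<And>i. 1 \<le> i \<Longrightarrow> i < L \<Longrightarrow> n i < n (Suc i)"
begin

definition k :: nat where "k = (L - 1) div 2"

lemma L_eq: "L = 2*k+1" and k_pos: "k \<ge> 1"
  using L unfolding k_def by (auto elim!: oddE)

definition NN :: "nat \<Rightarrow> nat" where
  "NN = (\<lambda>i. if i = 0 then 0 else if i \<le> L then n i else n L)"

definition len :: "nat \<Rightarrow> nat" where "len t = NN t - NN (t-1)"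

definition s :: "nat \<Rightarrow> nat" where
  "s = (\<lambda>j. \<Sum>i=1..j. NN (2*i - 1) - NN (2*i - 2))"

definition S :: nat where "S = s (k+1)"

definition seg :: "nat \<Rightarrow> 'y list \<Rightarrow> 'y list" where
  "seg t ys = take (len t) (drop (NN (t-1)) ys)"

definition Dcat :: "nat \<Rightarrow> 'y list \<Rightarrow> 'y list" where
  "Dcat j ys = concat (map (\<lambda>i. seg (2*i-1) ys) [1..<Suc j])"

lemma NN_strict: "i < i' \<Longrightarrow> i' \<le> L \<Longrightarrow> NN i < NN i'"
proof (induction i' rule: less_induct)
  case (less i')
  then obtain j where j: "i' = Suc j" by (cases i') auto
  have step: "NN j < NN (Suc j)"
  proof (cases "j = 0")
    case True then show ?thesis using n_pos less.prems by (simp add: NN_def)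
  next
    case False then show ?thesis using n_mono[of j] less.prems j by (simp add: NN_def)
  qed
  show ?case
  proof (cases "i = j")
    case True then show ?thesis using step j by simp
  next
    case False
    then have "NN i < NN j" using less.IH[of j] less.prems j by simp
    then show ?thesis using step j by simp
  qed
qed

lemma NN_mono: "i \<le> i' \<Longrightarrow> i' \<le> L \<Longrightarrow> NN i \<le> NN i'"
  using NN_strict[of i i'] by (cases "i = i'") auto

lemma NN_0[simp]: "NN 0 = 0" by (simp add: NN_def)

lemma len_pos: "1 \<le> t \<Longrightarrow> t \<le> L \<Longrightarrow> len t \<ge> 1"
  using NN_strict[of "t-1" t] by (simp add: len_def)

lemma NN_len: "1 \<le> t \<Longrightarrow> t \<le> L \<Longrightarrow> NN t = NN (t-1) + len t"
  using NN_mono[of "t-1" t] by (simp add: len_def)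

lemma fb_h_seg:
  assumes t: "1 \<le> t" "t \<le> L" and j: "NN (t-1) \<le> j" "j < NN t"
  shows "fb_h L n j = NN (t-1)"
proof -
  let ?X = "{0} \<union> {n i | i. 1 \<le> i \<and> i \<le> L \<and> n i \<le> j}"
  have fin: "finite ?X"
    by (rule finite_UnI) (auto intro: finite_subset[of _ "n ` {1..L}"])
  have mem: "NN (t-1) \<in> ?X"
  proof (cases "t = 1")
    case True then show ?thesis by simp
  next
    case False
    then have "NN (t-1) = n (t-1)" using t by (auto simp: NN_def)
    then show ?thesis using t j False by auto
  qed
  have ub: "x \<le> NN (t-1)" if "x \<in> ?X" for x
  proof -
    from that consider "x = 0" | i where "x = n i" "1 \<le> i" "i \<le> L" "n i \<le> j" by auto
    then show ?thesis
    proof cases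
      case 1 then show ?thesis by simp
    next
      case 2
      have "NN i = n i" using 2 by (simp add: NN_def)
      have "i < t"
      proof (rule ccontr)
        assume "\<not> i < t"
        then have "NN t \<le> NN i" using NN_mono[of t i] 2 by simp
        then show False using 2 j \<open>NN i = n i\<close> by simp
      qed
      then have "NN i \<le> NN (t-1)" using NN_mono[of i "t-1"] t by simp
      then show ?thesis using 2 \<open>NN i = n i\<close> by simp
    qed
  qed
  show ?thesis unfolding fb_h_def using fin mem ub by (intro Max_eqI) auto
qed

definition segidx :: "nat \<Rightarrow> nat" where "segidx j = (LEAST t. j < NN t)"

lemma segidx_eq:
  assumes t: "1 \<le> t" "t \<le> L" and j: "NN (t-1) \<le> j" "j < NN t"
  shows "segidx j = t"
  unfolding segidx_def
proof (rule Least_equality)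
  show "j < NN t" by fact
  fix t' assume "j < NN t'"
  show "t \<le> t'"
  proof (rule ccontr)
    assume "\<not> t \<le> t'"
    then have "NN t' \<le> NN (t-1)" using NN_mono[of t' "t-1"] t by simp
    then show False using j \<open>j < NN t'\<close> by simp
  qed
qed

lemma seg_append1:
  assumes "1 \<le> t" "t \<le> L" "NN t \<le> length p"
  shows "seg t (p@q) = seg t p"
  using assms NN_len[of t] unfolding seg_def by simp

lemma seg_append2:
  assumes "length p = NN (t-1)" "length q = len t"
  shows "seg t (p@q) = q"
  using assms unfolding seg_def by simp

lemma seg_take:
  assumes "1 \<le> t" "t \<le> L" "NN t \<le> m"
  shows "seg t (take m ys) = seg t ys"
  using assms NN_len[of t] unfolding seg_def by (simp add: take_drop min_def)

lemma length_seg: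
  assumes "1 \<le> t" "t \<le> L" "NN t \<le> length p"
  shows "length (seg t p) = len t"
  using assms NN_len[of t] unfolding seg_def by simp

lemma s_Suc: "s (Suc j) = s j + len (2*j+1)"
  unfolding s_def len_def by simp

lemma s_0[simp]: "s 0 = 0" unfolding s_def by simp

lemma s_mono: "j \<le> j' \<Longrightarrow> s j \<le> s j'"
  by (induction j' rule: dec_induct) (auto simp: s_Suc)

lemma length_Dcat:
  assumes "j \<le> k+1" "NN (2*j-1) \<le> length p"
  shows "length (Dcat j p) = s j"
  using assms
proof (induction j)
  case 0 then show ?case by (simp add: Dcat_def)
next
  case (Suc j)
  have "NN (2*j-1) \<le> NN (2*Suc j - 1)" using NN_mono[of "2*j-1" "2*Suc j-1"] Suc.prems L_eq by simp
  then have IH: "length (Dcat j p) = s j" using Suc by simp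
  have "length (seg (2*Suc j - 1) p) = len (2*j+1)"
    using length_seg[of "2*Suc j-1" p] Suc.prems L_eq by simp
  then show ?case using IH by (simp add: Dcat_def s_Suc)
qed

lemma Dcat_take:
  assumes "j \<le> k+1" "NN (2*j-1) \<le> m"
  shows "Dcat j (take m ys) = Dcat j ys"
  unfolding Dcat_def
proof (intro arg_cong[where f=concat] map_cong refl)
  fix i assume "i \<in> set [1..<Suc j]"
  then have i: "1 \<le> i" "i \<le> j" by auto
  have "NN (2*i-1) \<le> NN (2*j-1)" using NN_mono[of "2*i-1" "2*j-1"] i assms L_eq by simp
  then show "seg (2*i-1) (take m ys) = seg (2*i-1) ys"
    using seg_take[of "2*i-1" m ys] i assms L_eq by simp
qed

lemma Dcat_append_even:
  assumes "1 \<le> j" "j \<le> k" "length p = NN (2*j-1)"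
  shows "Dcat j (p@z) = Dcat j p"
  unfolding Dcat_def
proof (intro arg_cong[where f=concat] map_cong refl)
  fix i assume "i \<in> set [1..<Suc j]"
  then have i: "1 \<le> i" "i \<le> j" by auto
  have "NN (2*i-1) \<le> NN (2*j-1)" using NN_mono[of "2*i-1" "2*j-1"] i assms L_eq by simp
  then show "seg (2*i-1) (p@z) = seg (2*i-1) p"
    using seg_append1[of "2*i-1" p z] i assms L_eq by simp
qed

lemma Dcat_append_odd:
  assumes "j \<le> k" "length p = NN (2*j)" "length d = len (2*j+1)"
  shows "Dcat (Suc j) (p@d) = Dcat j p @ d"
proof -
  have "Dcat j (p@d) = Dcat j p"
    unfolding Dcat_def
  proof (intro arg_cong[where f=concat] map_cong refl)
    fix i assume "i \<in> set [1..<Suc j]"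
    then have i: "1 \<le> i" "i \<le> j" by auto
    have "NN (2*i-1) \<le> NN (2*j)" using NN_mono[of "2*i-1" "2*j"] i assms L_eq by simp
    then show "seg (2*i-1) (p@d) = seg (2*i-1) p"
      using seg_append1[of "2*i-1" p d] i assms L_eq by simp
  qed
  moreover have "seg (2*Suc j - 1) (p@d) = d"
    using seg_append2[of p "2*Suc j - 1" d] assms by simp
  ultimately show ?thesis by (simp add: Dcat_def)
qed

end


context scheme
begin

definition iota :: "nat \<Rightarrow> 'x list \<Rightarrow> 'y list \<Rightarrow> ereal" where
  "iota j c x = info_dens W PX (s j) (take (s j) c) x"

definition decx :: "nat \<Rightarrow> (nat \<Rightarrow> 'x list) \<Rightarrow> 'y list \<Rightarrow> nat" where
  "decx j C x = (SOME v. v \<in> {1..M} \<and> (\<forall>v'\<in>{1..M}. iota j (C v') x \<le> iota j (C v) x))"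

lemma decx_ex: "\<exists>v. v \<in> {1..M} \<and> (\<forall>v'\<in>{1..M}. iota j (C v') x \<le> iota j (C v) x)"
proof -
  let ?I = "(\<lambda>v. iota j (C v) x) ` {1..M}"
  have "finite ?I" "?I \<noteq> {}" using M by auto
  then have "Max ?I \<in> ?I" by (rule Max_in)
  then obtain v where v: "v \<in> {1..M}" "Max ?I = iota j (C v) x" by auto
  have "\<forall>v'\<in>{1..M}. iota j (C v') x \<le> iota j (C v) x"
    using v \<open>finite ?I\<close> by (metis (no_types, lifting) Max_ge image_eqI)
  then show ?thesis using v by blast
qed

lemma decx_in: "decx j C x \<in> {1..M}"
  and decx_max: "v' \<in> {1..M} \<Longrightarrow> iota j (C v') x \<le> iota j (C (decx j C x)) x"
  using someI_ex[OF decx_ex[of j C x]] unfolding decx_def by blast+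

definition dec :: "nat \<Rightarrow> (nat \<Rightarrow> 'x list) \<Rightarrow> 'y list \<Rightarrow> nat" where
  "dec j C p = decx j C (Dcat j p)"

definition xsym :: "nat \<Rightarrow> (nat \<Rightarrow> 'x list) \<Rightarrow> nat \<Rightarrow> 'y list \<Rightarrow> 'x" where
  "xsym j C w p = (if dec j C p = w then xA else xR)"

definition enc :: "nat \<Rightarrow> (nat \<Rightarrow> 'x list) \<times> (nat \<times> 'y list \<Rightarrow> bool) \<Rightarrow> nat \<Rightarrow> 'y list \<Rightarrow> 'x" where
  "enc tm u w p = (case tm of 0 \<Rightarrow> xA | Suc j \<Rightarrow>
      (let t = segidx j in if odd t then fst u w ! (s ((t+1) div 2 - 1) + (j - NN (t-1)))
       else xsym (t div 2) (fst u) w p))"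

definition SK :: "nat \<Rightarrow> (nat \<Rightarrow> 'x list) \<times> (nat \<times> 'y list \<Rightarrow> bool) \<Rightarrow> nat \<Rightarrow> 'y list \<Rightarrow> 'y list \<Rightarrow> real" where
  "SK t u w p q = (\<Prod>i<len t. W (enc (Suc (NN (t-1) + i)) u w p) (q!i))"

abbreviation PPe where "PPe u w m ys \<equiv> PP W L n enc u w m ys"

lemma seg_step:
  assumes t: "1 \<le> t" "t \<le> L"
  shows "(\<Sum>p\<in>seqs (NN t). PPe u w (NN t) p * G p) =
    (\<Sum>p\<in>seqs (NN (t-1)). PPe u w (NN (t-1)) p * (\<Sum>q\<in>seqs (len t). SK t u w p q * G (p@q)))"
proof -
  have "(\<Sum>p\<in>seqs (NN t). PPe u w (NN t) p * G p) =
      (\<Sum>p\<in>seqs (NN (t-1) + len t). PPe u w (NN (t-1) + len t) p * G p)"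
    using NN_len[OF t] by simp
  also have "\<dots> = (\<Sum>p\<in>seqs (NN (t-1)). \<Sum>q\<in>seqs (len t). PPe u w (NN (t-1) + len t) (p@q) * G (p@q))"
    by (rule sum_seqs_append)
  also have "\<dots> = (\<Sum>p\<in>seqs (NN (t-1)). \<Sum>q\<in>seqs (len t). PPe u w (NN (t-1)) p * (SK t u w p q * G (p@q)))"
  proof (intro sum.cong refl)
    fix p q :: "'y list" assume p: "p \<in> seqs (NN (t-1))" and q: "q \<in> seqs (len t)"
    have "PPe u w (NN (t-1) + len t) (p@q) = PPe u w (NN (t-1)) p *
       (\<Prod>i<len t. W (enc (Suc (NN (t-1)+i)) u w (take (fb_h L n (NN (t-1)+i)) (p@q))) (q!i))"
      using PP_append[of p "NN (t-1)" q "len t"] p q by simp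
    also have "(\<Prod>i<len t. W (enc (Suc (NN (t-1)+i)) u w (take (fb_h L n (NN (t-1)+i)) (p@q))) (q!i))
        = SK t u w p q"
      unfolding SK_def
    proof (intro prod.cong refl)
      fix i assume "i \<in> {..<len t}"
      then have "fb_h L n (NN (t-1)+i) = NN (t-1)"
        using fb_h_seg[OF t, of "NN (t-1) + i"] NN_len[OF t] by simp
      then show "W (enc (Suc (NN (t-1)+i)) u w (take (fb_h L n (NN (t-1)+i)) (p@q))) (q!i) =
          W (enc (Suc (NN (t-1)+i)) u w p) (q!i)" using p by simp
    qed
    finally show "PPe u w (NN (t-1) + len t) (p@q) * G (p@q) = PPe u w (NN (t-1)) p * (SK t u w p q * G (p@q))"
      by simp
  qed
  also have "\<dots> = (\<Sum>p\<in>seqs (NN (t-1)). PPe u w (NN (t-1)) p * (\<Sum>q\<in>seqs (len t). SK t u w p q * G (p@q)))"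
    by (simp add: sum_distrib_left)
  finally show ?thesis .
qed

definition cws :: "nat \<Rightarrow> 'x list \<Rightarrow> 'x list" where
  "cws i c = take (len (2*i-1)) (drop (s (i-1)) c)"

lemma s_le_S: "j \<le> k+1 \<Longrightarrow> s j \<le> S"
  unfolding S_def by (rule s_mono)

lemma take_s_Suc:
  assumes "length c = S" "Suc j \<le> k+1"
  shows "take (s (Suc j)) c = take (s j) c @ cws (Suc j) c"
proof -
  have "s (Suc j) \<le> S" using s_le_S assms by simp
  then show ?thesis using assms unfolding cws_def s_Suc
    by (simp add: take_add)
qed

lemma SK_odd:
  assumes i: "1 \<le> i" "i \<le> k+1" and c: "length (fst u w) = S" and q: "length q = len (2*i-1)"
  shows "SK (2*i-1) u w p q = chan_n W (cws i (fst u w)) q"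
proof -
  have t: "1 \<le> 2*i-1" "2*i-1 \<le> L" using i L_eq by auto
  have e: "2*(i-1)+1 = 2*i-1" "Suc (i-1) = i" using i by auto
  have si: "s (i-1) + len (2*i-1) \<le> S"
    using s_Suc[of "i-1"] s_le_S[of i] i unfolding e by simp
  have lc: "length (cws i (fst u w)) = len (2*i-1)"
    using si c unfolding cws_def by simp
  have "SK (2*i-1) u w p q = (\<Prod>j<len (2*i-1). W (cws i (fst u w) ! j) (q!j))"
    unfolding SK_def
  proof (intro prod.cong refl)
    fix j assume "j \<in> {..<len (2*i-1)}"
    then have j: "j < len (2*i-1)" by simp
    have "segidx (NN (2*i-1-1) + j) = 2*i-1"
      using segidx_eq[OF t, of "NN (2*i-1-1) + j"] NN_len[OF t] j by simp
    moreover have "(2*i-1+1) div 2 - 1 = i - 1" using i by simp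
    moreover have "odd (2*i-1)" using i by simp
    ultimately have "enc (Suc (NN (2*i-1-1) + j)) u w p = fst u w ! (s (i-1) + j)"
      unfolding enc_def by (simp add: Let_def)
    also have "\<dots> = cws i (fst u w) ! j" using j si c unfolding cws_def by simp
    finally show "W (enc (Suc (NN (2*i-1-1) + j)) u w p) (q!j) = W (cws i (fst u w) ! j) (q!j)" by simp
  qed
  also have "\<dots> = chan_n W (cws i (fst u w)) q"
    using chan_n_nth[of "cws i (fst u w)" "len (2*i-1)" q W] lc q by simp
  finally show ?thesis .
qed

lemma SK_even:
  assumes l: "1 \<le> l" "l \<le> k" and q: "length q = len (2*l)"
  shows "SK (2*l) u w p q = chan_pow W (xsym l (fst u) w p) q"
proof -
  have t: "1 \<le> 2*l" "2*l \<le> L" using l L_eq by auto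
  have "SK (2*l) u w p q = (\<Prod>j<len (2*l). W (xsym l (fst u) w p) (q!j))"
    unfolding SK_def
  proof (intro prod.cong refl)
    fix j assume "j \<in> {..<len (2*l)}"
    then have j: "j < len (2*l)" by simp
    have "segidx (NN (2*l-1) + j) = 2*l"
      using segidx_eq[OF t, of "NN (2*l-1) + j"] NN_len[OF t] j by simp
    then show "W (enc (Suc (NN (2*l-1) + j)) u w p) (q!j) = W (xsym l (fst u) w p) (q!j)"
      unfolding enc_def by (simp add: Let_def)
  qed
  also have "\<dots> = chan_pow W (xsym l (fst u) w p) q"
    using chan_pow_nth[of q "len (2*l)" W] q by simp
  finally show ?thesis .
qed

lemma SK_nonneg: "0 \<le> SK t u w p q"
  unfolding SK_def using W_nonneg by (intro prod_nonneg) auto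

end


context scheme
begin

lemma seqs_0: "seqs 0 = {[]}" by (auto simp: seqs_def)

lemma Dstage:
  fixes u :: "(nat \<Rightarrow> 'x list) \<times> (nat \<times> 'y list \<Rightarrow> bool)" and \<phi> :: "nat \<Rightarrow> 'y list \<Rightarrow> real"
    and \<theta> :: "nat \<Rightarrow> real" and H :: "'y list \<Rightarrow> real"
  assumes j: "1 \<le> j" "j \<le> k+1" and c: "length (fst u w) = S"
    and \<phi>_nonneg: "\<And>l z. 0 \<le> \<phi> l z"
    and \<phi>\<theta>: "\<And>l p. 1 \<le> l \<Longrightarrow> l < j \<Longrightarrow>
          (\<Sum>z\<in>seqs (len (2*l)). chan_pow W (xsym l (fst u) w p) z * \<phi> l z) \<le> \<theta> l"
    and H: "\<And>x. 0 \<le> H x"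
  shows "(\<Sum>p\<in>seqs (NN (2*j-1)). PPe u w (NN (2*j-1)) p * ((\<Prod>l\<in>{1..<j}. \<phi> l (seg (2*l) p)) * H (Dcat j p)))
        \<le> (\<Prod>l\<in>{1..<j}. \<theta> l) * (\<Sum>x\<in>seqs (s j). chan_n W (take (s j) (fst u w)) x * H x)"
  using j \<phi>\<theta> H
proof (induction j arbitrary: H rule: nat_induct_at_least)
  case base
  let ?c = "fst u w"
  have "(\<Sum>p\<in>seqs (NN (2*1-1)). PPe u w (NN (2*1-1)) p * ((\<Prod>l\<in>{1..<1}. \<phi> l (seg (2*l) p)) * H (Dcat 1 p)))
      = (\<Sum>p\<in>seqs (NN 1). PPe u w (NN 1) p * H (Dcat 1 p))" by simp
  also have "\<dots> = (\<Sum>p\<in>seqs (NN (1-1)). PPe u w (NN (1-1)) p * (\<Sum>q\<in>seqs (len 1). SK 1 u w p q * H (Dcat 1 (p@q))))"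
    by (rule seg_step) (use L_eq in auto)
  also have "\<dots> = (\<Sum>q\<in>seqs (len 1). SK 1 u w [] q * H (Dcat 1 q))"
    by (simp add: seqs_0 PP_def)
  also have "\<dots> = (\<Sum>q\<in>seqs (s 1). chan_n W (take (s 1) ?c) q * H q)"
  proof -
    have "s 1 = len 1" using s_Suc[of 0] by simp
    moreover have "take (s 1) ?c = cws 1 ?c" using take_s_Suc[OF c, of 0] k_pos by simp
    moreover have "SK 1 u w [] q = chan_n W (cws 1 ?c) q" if "length q = len 1" for q
      using SK_odd[of 1 u w q "[]"] c that k_pos by simp
    moreover have "Dcat 1 q = q" if "length q = len 1" for q
      using Dcat_append_odd[of 0 "[]" q] that by (simp add: Dcat_def)
    ultimately show ?thesis by (intro sum.cong refl) auto
  qed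
  finally show ?case by simp
next
  case (Suc j)
  let ?c = "fst u w"
  have j: "1 \<le> j" "j \<le> k" using Suc by auto
  have e1: "2 * Suc j - 1 = Suc (2*j)" "Suc (2*j) - 1 = 2*j" "2*j - 1 + 1 = 2*j" using j by auto
  have tt: "1 \<le> Suc (2*j)" "Suc (2*j) \<le> L" "1 \<le> 2*j" "2*j \<le> L" using j L_eq by auto
  define \<Phi> where "\<Phi> p = (\<Prod>l\<in>{1..<j}. \<phi> l (seg (2*l) p))" for p
  define H' where "H' x = (\<Sum>d\<in>seqs (len (Suc (2*j))). chan_n W (cws (Suc j) ?c) d * H (x@d))" for x
  define G where "G p = (\<Prod>l\<in>{1..<Suc j}. \<phi> l (seg (2*l) p)) * H (Dcat (Suc j) p)" for p
  have \<theta>j: "(\<Sum>z\<in>seqs (len (2*j)). chan_pow W (xsym j (fst u) w p) z * \<phi> j z) \<le> \<theta> j" for p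
    using Suc.prems(2)[of j p] j by simp
  have \<theta>pos: "0 \<le> \<theta> j"
    using \<theta>j[of "[]"] by (meson order_trans sum_nonneg mult_nonneg_nonneg chan_pow_nonneg W_nonneg \<phi>_nonneg)
  have H'pos: "0 \<le> H' x" for x
    unfolding H'_def using Suc.prems(3) chan_n_nonneg[OF W_nonneg] by (intro sum_nonneg mult_nonneg_nonneg) auto
  have \<Phi>pos: "0 \<le> \<Phi> p" for p unfolding \<Phi>_def using \<phi>_nonneg by (intro prod_nonneg) auto
  have G_eq: "G ((p@z)@d) = \<Phi> p * \<phi> j z * H (Dcat j p @ d)"
    if p: "length p = NN (2*j-1)" and z: "length z = len (2*j)" and d: "length d = len (Suc (2*j))" for p z d
  proof -
    have lpz: "length (p@z) = NN (2*j)" using p z NN_len[of "2*j"] tt e1 by simp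
    have "seg (2*l) ((p@z)@d) = seg (2*l) p" if l: "l \<in> {1..<j}" for l
    proof -
      have "NN (2*l) \<le> NN (2*j-1)" using NN_mono[of "2*l" "2*j-1"] l tt by auto
      then show ?thesis using seg_append1[of "2*l" "p@z" d] seg_append1[of "2*l" p z] l lpz p tt NN_mono[of "2*j-1" "2*j"]
        by auto
    qed
    then have "(\<Prod>l\<in>{1..<j}. \<phi> l (seg (2*l) ((p@z)@d))) = \<Phi> p" unfolding \<Phi>_def by (intro prod.cong) auto
    moreover have "seg (2*j) ((p@z)@d) = z"
      using seg_append1[of "2*j" "p@z" d] seg_append2[of p "2*j" z] lpz p z tt by simp
    moreover have "{1..<Suc j} = insert j {1..<j}" using j by auto
    moreover have "Dcat (Suc j) ((p@z)@d) = Dcat j p @ d"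
      using Dcat_append_odd[of j "p@z" d] Dcat_append_even[of j p z] j lpz p d by simp
    ultimately show ?thesis unfolding G_def by (simp add: mult_ac)
  qed
  have "(\<Sum>p\<in>seqs (NN (2*Suc j-1)). PPe u w (NN (2*Suc j-1)) p * G p)
     = (\<Sum>p1\<in>seqs (NN (2*j)). PPe u w (NN (2*j)) p1 *
          (\<Sum>d\<in>seqs (len (Suc (2*j))). SK (Suc (2*j)) u w p1 d * G (p1@d)))"
    using seg_step[of "Suc (2*j)" u w G] tt unfolding e1 by simp
  also have "\<dots> = (\<Sum>p\<in>seqs (NN (2*j-1)). PPe u w (NN (2*j-1)) p *
          (\<Sum>z\<in>seqs (len (2*j)). SK (2*j) u w p z *
             (\<Sum>d\<in>seqs (len (Suc (2*j))). SK (Suc (2*j)) u w (p@z) d * G ((p@z)@d))))"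
    using seg_step[of "2*j" u w] tt by simp
  also have "\<dots> = (\<Sum>p\<in>seqs (NN (2*j-1)). PPe u w (NN (2*j-1)) p *
          (\<Phi> p * (\<Sum>z\<in>seqs (len (2*j)). chan_pow W (xsym j (fst u) w p) z * \<phi> j z) * H' (Dcat j p)))"
  proof (intro sum.cong refl arg_cong2[where f="(*)"])
    fix p :: "'y list" assume p: "p \<in> seqs (NN (2*j-1))"
    have "(\<Sum>z\<in>seqs (len (2*j)). SK (2*j) u w p z *
             (\<Sum>d\<in>seqs (len (Suc (2*j))). SK (Suc (2*j)) u w (p@z) d * G ((p@z)@d)))
        = (\<Sum>z\<in>seqs (len (2*j)). chan_pow W (xsym j (fst u) w p) z *
             (\<Sum>d\<in>seqs (len (Suc (2*j))). chan_n W (cws (Suc j) ?c) d * (\<Phi> p * \<phi> j z * H (Dcat j p @ d))))"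
    proof (intro sum.cong refl arg_cong2[where f="(*)"])
      fix z :: "'y list" assume z: "z \<in> seqs (len (2*j))"
      show "SK (2*j) u w p z = chan_pow W (xsym j (fst u) w p) z" using SK_even[of j z] j z by simp
      fix d :: "'y list" assume d: "d \<in> seqs (len (Suc (2*j)))"
      show "SK (Suc (2*j)) u w (p@z) d = chan_n W (cws (Suc j) ?c) d"
        using SK_odd[of "Suc j" u w d "p@z"] j c d e1 by simp
      show "G ((p@z)@d) = \<Phi> p * \<phi> j z * H (Dcat j p @ d)" using G_eq p z d by simp
    qed
    also have "\<dots> = \<Phi> p * (\<Sum>z\<in>seqs (len (2*j)). chan_pow W (xsym j (fst u) w p) z * \<phi> j z) * H' (Dcat j p)"
      unfolding H'_def by (simp add: sum_distrib_left sum_distrib_right mult_ac)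
    finally show "(\<Sum>z\<in>seqs (len (2*j)). SK (2*j) u w p z *
             (\<Sum>d\<in>seqs (len (Suc (2*j))). SK (Suc (2*j)) u w (p@z) d * G ((p@z)@d)))
        = \<Phi> p * (\<Sum>z\<in>seqs (len (2*j)). chan_pow W (xsym j (fst u) w p) z * \<phi> j z) * H' (Dcat j p)" .
  qed
  also have "\<dots> \<le> (\<Sum>p\<in>seqs (NN (2*j-1)). PPe u w (NN (2*j-1)) p * (\<Phi> p * \<theta> j * H' (Dcat j p)))"
    by (intro sum_mono mult_left_mono mult_right_mono \<theta>j PP_nonneg W_nonneg \<Phi>pos H'pos mult_nonneg_nonneg)
  also have "\<dots> = \<theta> j * (\<Sum>p\<in>seqs (NN (2*j-1)). PPe u w (NN (2*j-1)) p * (\<Phi> p * H' (Dcat j p)))"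
    by (simp add: sum_distrib_left mult_ac)
  also have "\<dots> \<le> \<theta> j * ((\<Prod>l\<in>{1..<j}. \<theta> l) * (\<Sum>x\<in>seqs (s j). chan_n W (take (s j) ?c) x * H' x))"
    using Suc.IH[of H'] Suc.prems(1,2) H'pos j unfolding \<Phi>_def by (intro mult_left_mono \<theta>pos) auto
  also have "(\<Sum>x\<in>seqs (s j). chan_n W (take (s j) ?c) x * H' x) =
       (\<Sum>x\<in>seqs (s (Suc j)). chan_n W (take (s (Suc j)) ?c) x * H x)"
  proof -
    have "(\<Sum>x\<in>seqs (s (Suc j)). chan_n W (take (s (Suc j)) ?c) x * H x)
       = (\<Sum>x\<in>seqs (s j). \<Sum>d\<in>seqs (len (Suc (2*j))). chan_n W (take (s (Suc j)) ?c) (x@d) * H (x@d))"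
      unfolding s_Suc by (simp add: sum_seqs_append)
    also have "\<dots> = (\<Sum>x\<in>seqs (s j). \<Sum>d\<in>seqs (len (Suc (2*j))). chan_n W (take (s j) ?c) x *
           (chan_n W (cws (Suc j) ?c) d * H (x@d)))"
    proof (intro sum.cong refl)
      fix x d :: "'y list" assume x: "x \<in> seqs (s j)"
      have "length (take (s j) ?c) = s j" using c s_le_S[of j] j by simp
      then show "chan_n W (take (s (Suc j)) ?c) (x@d) * H (x@d) = chan_n W (take (s j) ?c) x *
           (chan_n W (cws (Suc j) ?c) d * H (x@d))"
        using take_s_Suc[OF c, of j] j x chan_n_append[of "take (s j) ?c" x W "cws (Suc j) ?c" d] by simp
    qed
    finally show ?thesis unfolding H'_def by (simp add: sum_distrib_left)
  qed
  also have "\<theta> j * ((\<Prod>l\<in>{1..<j}. \<theta> l) * (\<Sum>x\<in>seqs (s (Suc j)). chan_n W (take (s (Suc j)) ?c) x * H x))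
     = (\<Prod>l\<in>{1..<Suc j}. \<theta> l) * (\<Sum>x\<in>seqs (s (Suc j)). chan_n W (take (s (Suc j)) ?c) x * H x)"
  proof -
    have "{1..<Suc j} = insert j {1..<j}" using j by auto
    then show ?thesis by simp
  qed
  finally show ?case unfolding G_def .
qed

end


context scheme
begin

lemma NN_L: "NN L = n L" using L_eq by (simp add: NN_def)

lemma Tstage:
  fixes u :: "(nat \<Rightarrow> 'x list) \<times> (nat \<times> 'y list \<Rightarrow> bool)" and \<phi> :: "nat \<Rightarrow> 'y list \<Rightarrow> real"
    and \<theta> :: "nat \<Rightarrow> real" and Hz :: "'y list \<Rightarrow> 'y list \<Rightarrow> real"
  assumes j: "1 \<le> j" "j \<le> k" and c: "length (fst u w) = S"
    and \<phi>_nonneg: "\<And>l z. 0 \<le> \<phi> l z"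
    and \<phi>\<theta>: "\<And>l p. 1 \<le> l \<Longrightarrow> l < j \<Longrightarrow>
          (\<Sum>z\<in>seqs (len (2*l)). chan_pow W (xsym l (fst u) w p) z * \<phi> l z) \<le> \<theta> l"
    and Hz: "\<And>x z. 0 \<le> Hz x z"
  shows "(\<Sum>ys\<in>seqs (NN L). PPe u w (NN L) ys * ((\<Prod>l\<in>{1..<j}. \<phi> l (seg (2*l) ys)) * Hz (Dcat j ys) (seg (2*j) ys)))
     \<le> (\<Prod>l\<in>{1..<j}. \<theta> l) * (\<Sum>x\<in>seqs (s j). chan_n W (take (s j) (fst u w)) x *
          (\<Sum>z\<in>seqs (len (2*j)). chan_pow W (if decx j (fst u) x = w then xA else xR) z * Hz x z))"
proof -
  have tt: "1 \<le> 2*j" "2*j \<le> L" using j L_eq by auto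
  define G where "G p = (\<Prod>l\<in>{1..<j}. \<phi> l (seg (2*l) p)) * Hz (Dcat j p) (seg (2*j) p)" for p
  define H where "H x = (\<Sum>z\<in>seqs (len (2*j)). chan_pow W (if decx j (fst u) x = w then xA else xR) z * Hz x z)" for x
  have mono: "NN (2*j) \<le> NN L" using NN_mono[of "2*j" L] tt by simp
  have "(\<Sum>ys\<in>seqs (NN L). PPe u w (NN L) ys * G ys)
     = (\<Sum>ys\<in>seqs (NN (2*j) + (NN L - NN (2*j))). PPe u w (NN (2*j) + (NN L - NN (2*j))) ys * G (take (NN (2*j)) ys))"
  proof -
    have "G ys = G (take (NN (2*j)) ys)" for ys
    proof -
      have "seg (2*l) (take (NN (2*j)) ys) = seg (2*l) ys" if "l \<in> {1..<j}" for l
        using seg_take[of "2*l" "NN (2*j)" ys] NN_mono[of "2*l" "2*j"] that tt by auto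
      moreover have "seg (2*j) (take (NN (2*j)) ys) = seg (2*j) ys" using seg_take[of "2*j"] tt by simp
      moreover have "Dcat j (take (NN (2*j)) ys) = Dcat j ys"
        using Dcat_take[of j "NN (2*j)" ys] NN_mono[of "2*j-1" "2*j"] j tt by simp
      ultimately show ?thesis unfolding G_def by (auto intro!: prod.cong)
    qed
    then show ?thesis using mono by simp
  qed
  also have "\<dots> = (\<Sum>p\<in>seqs (NN (2*j)). PPe u w (NN (2*j)) p * G p)"
    by (rule PP_marginal[OF W_sum])
  also have "\<dots> = (\<Sum>p\<in>seqs (NN (2*j-1)). PPe u w (NN (2*j-1)) p * (\<Sum>z\<in>seqs (len (2*j)). SK (2*j) u w p z * G (p@z)))"
    using seg_step[of "2*j" u w G] tt by simp
  also have "\<dots> = (\<Sum>p\<in>seqs (NN (2*j-1)). PPe u w (NN (2*j-1)) p * ((\<Prod>l\<in>{1..<j}. \<phi> l (seg (2*l) p)) * H (Dcat j p)))"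
  proof (intro sum.cong refl arg_cong2[where f="(*)"])
    fix p :: "'y list" assume p: "p \<in> seqs (NN (2*j-1))"
    have "(\<Sum>z\<in>seqs (len (2*j)). SK (2*j) u w p z * G (p@z)) =
        (\<Sum>z\<in>seqs (len (2*j)). (\<Prod>l\<in>{1..<j}. \<phi> l (seg (2*l) p)) *
           (chan_pow W (if decx j (fst u) (Dcat j p) = w then xA else xR) z * Hz (Dcat j p) z))"
    proof (intro sum.cong refl)
      fix z :: "'y list" assume z: "z \<in> seqs (len (2*j))"
      have lpz: "length (p@z) = NN (2*j)" using p z NN_len[of "2*j"] tt by simp
      have "seg (2*l) (p@z) = seg (2*l) p" if "l \<in> {1..<j}" for l
        using seg_append1[of "2*l" p z] NN_mono[of "2*l" "2*j-1"] that tt p by auto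
      then have "(\<Prod>l\<in>{1..<j}. \<phi> l (seg (2*l) (p@z))) = (\<Prod>l\<in>{1..<j}. \<phi> l (seg (2*l) p))"
        by (intro prod.cong) auto
      moreover have "seg (2*j) (p@z) = z" using seg_append2[of p "2*j" z] p z by simp
      moreover have "Dcat j (p@z) = Dcat j p" using Dcat_append_even[of j p z] j p by simp
      moreover have "SK (2*j) u w p z = chan_pow W (xsym j (fst u) w p) z" using SK_even[of j z] j z by simp
      ultimately show "SK (2*j) u w p z * G (p@z) = (\<Prod>l\<in>{1..<j}. \<phi> l (seg (2*l) p)) *
           (chan_pow W (if decx j (fst u) (Dcat j p) = w then xA else xR) z * Hz (Dcat j p) z)"
        unfolding G_def xsym_def dec_def by (simp add: mult_ac cong: prod.cong)
    qed
    then show "(\<Sum>z\<in>seqs (len (2*j)). SK (2*j) u w p z * G (p@z)) =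
        (\<Prod>l\<in>{1..<j}. \<phi> l (seg (2*l) p)) * H (Dcat j p)"
      unfolding H_def by (simp add: sum_distrib_left)
  qed
  also have "\<dots> \<le> (\<Prod>l\<in>{1..<j}. \<theta> l) * (\<Sum>x\<in>seqs (s j). chan_n W (take (s j) (fst u w)) x * H x)"
    using j c \<phi>_nonneg \<phi>\<theta> 
    by (intro Dstage) (auto simp: H_def intro!: sum_nonneg mult_nonneg_nonneg chan_pow_nonneg W_nonneg Hz)
  finally show ?thesis unfolding G_def H_def .
qed

lemma Fstage:
  fixes u :: "(nat \<Rightarrow> 'x list) \<times> (nat \<times> 'y list \<Rightarrow> bool)" and \<phi> :: "nat \<Rightarrow> 'y list \<Rightarrow> real"
    and \<theta> :: "nat \<Rightarrow> real" and H :: "'y list \<Rightarrow> real"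
  assumes c: "length (fst u w) = S"
    and \<phi>_nonneg: "\<And>l z. 0 \<le> \<phi> l z"
    and \<phi>\<theta>: "\<And>l p. 1 \<le> l \<Longrightarrow> l < k+1 \<Longrightarrow>
          (\<Sum>z\<in>seqs (len (2*l)). chan_pow W (xsym l (fst u) w p) z * \<phi> l z) \<le> \<theta> l"
    and H: "\<And>x. 0 \<le> H x"
  shows "(\<Sum>ys\<in>seqs (NN L). PPe u w (NN L) ys * ((\<Prod>l\<in>{1..<k+1}. \<phi> l (seg (2*l) ys)) * H (Dcat (k+1) ys)))
     \<le> (\<Prod>l\<in>{1..<k+1}. \<theta> l) * (\<Sum>x\<in>seqs (s (k+1)). chan_n W (take (s (k+1)) (fst u w)) x * H x)"
proof -
  have "2*(k+1) - 1 = L" using L_eq by simp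
  then show ?thesis using Dstage[of "k+1" u w \<phi> \<theta> H] c \<phi>_nonneg \<phi>\<theta> H by simp
qed

lemma PP_total: "(\<Sum>ys\<in>seqs (NN L). PPe u w (NN L) ys) = 1"
  using PP_marginal[OF W_sum, where m=0 and r="NN L" and f=enc and u=u and w=w and G="\<lambda>_. 1"]
  by (simp add: seqs_0 PP_def)

lemma PPe_fst: "PPe (C, R) w m ys = PPe (C, R') w m ys"
  unfolding PP_def enc_def by (simp only: fst_conv)

end


lemma prod_ind:
  assumes "finite J"
  shows "(\<Prod>l\<in>J. if P l then 1 else 0 :: real) = (if \<forall>l\<in>J. P l then 1 else 0)"
  using assms by (induction J rule: finite_induct) auto

lemma prod_if_subset:
  fixes g :: "'a \<Rightarrow> real"
  assumes "finite A" "E \<subseteq> A"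
  shows "(\<Prod>d\<in>A. if d \<in> E then g d else 1) = (\<Prod>d\<in>E. g d)"
proof -
  have "(\<Prod>d\<in>A. if d \<in> E then g d else 1) = (\<Prod>d\<in>E. if d \<in> E then g d else 1)"
    using assms by (intro prod.mono_neutral_right) auto
  also have "\<dots> = (\<Prod>d\<in>E. g d)" by simp
  finally show ?thesis .
qed

context scheme
begin

definition Rdom :: "(nat \<times> 'y list) set" where
  "Rdom = Sigma {1..k} (\<lambda>l. seqs (len (2*l)))"

definition RS :: "(nat \<times> 'y list \<Rightarrow> bool) set" where
  "RS = PiE Rdom (\<lambda>_. UNIV)"

definition qR :: "nat \<times> 'y list \<Rightarrow> bool \<Rightarrow> real" where
  "qR d v = (if v then T (fst d) (snd d) else 1 - T (fst d) (snd d))"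

definition PR :: "(nat \<times> 'y list \<Rightarrow> bool) \<Rightarrow> real" where
  "PR R = (\<Prod>d\<in>Rdom. qR d (R d))"

lemma Rdom_finite: "finite Rdom"
  unfolding Rdom_def by (intro finite_SigmaI) (auto intro: seqs_finite)

lemma RS_finite: "finite RS"
  unfolding RS_def using Rdom_finite by (intro finite_PiE) auto

lemma R_marg:
  assumes J: "J \<subseteq> {1..k}" and zz: "\<And>l. l \<in> J \<Longrightarrow> length (zz l) = len (2*l)"
  shows "(\<Sum>R\<in>RS. PR R * (\<Prod>l\<in>J. if R (l, zz l) = v l then 1 else 0)) = (\<Prod>l\<in>J. qR (l, zz l) (v l))"
proof -
  define e where "e l = (l, zz l)" for l
  define E where "E = e ` J"
  have finJ: "finite J" using J finite_subset by blast
  have inj: "inj_on e J" unfolding e_def by (auto simp: inj_on_def)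
  have ER: "E \<subseteq> Rdom" unfolding E_def e_def Rdom_def using J zz by auto
  define f where "f d b = qR d b * (if d \<in> E then (if b = v (fst d) then 1 else 0) else 1)" for d b
  have ef: "fst (e l) = l" for l unfolding e_def by simp
  have 1: "PR R * (\<Prod>l\<in>J. if R (l, zz l) = v l then 1 else 0) = (\<Prod>d\<in>Rdom. f d (R d))" for R
  proof -
    have "(\<Prod>d\<in>Rdom. f d (R d)) = PR R * (\<Prod>d\<in>Rdom. if d \<in> E then (if R d = v (fst d) then 1 else 0) else 1)"
      unfolding f_def PR_def by (simp add: prod.distrib)
    also have "(\<Prod>d\<in>Rdom. if d \<in> E then (if R d = v (fst d) then 1 else 0) else 1)
        = (\<Prod>d\<in>E. (if R d = v (fst d) then 1 else 0::real))"
      using prod_if_subset[OF Rdom_finite ER, of "\<lambda>d. if R d = v (fst d) then 1 else 0"] by simp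
    also have "\<dots> = (\<Prod>l\<in>J. if R (l, zz l) = v l then 1 else 0)"
      unfolding E_def using prod.reindex[OF inj, of "\<lambda>d. if R d = v (fst d) then 1 else (0::real)"]
      by (simp add: e_def)
    finally show ?thesis by simp
  qed
  have "(\<Sum>R\<in>RS. PR R * (\<Prod>l\<in>J. if R (l, zz l) = v l then 1 else 0)) = (\<Sum>R\<in>RS. \<Prod>d\<in>Rdom. f d (R d))"
    using 1 by simp
  also have "\<dots> = (\<Prod>d\<in>Rdom. \<Sum>b\<in>UNIV. f d b)"
    unfolding RS_def by (rule prod_sum_PiE[symmetric]) (use Rdom_finite in auto)
  also have "\<dots> = (\<Prod>d\<in>Rdom. if d \<in> E then qR d (v (fst d)) else 1)"
  proof (intro prod.cong refl)
    fix d
    have "(\<Sum>b\<in>UNIV. f d b) = f d True + f d False" by (simp add: UNIV_bool)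
    then show "(\<Sum>b\<in>UNIV. f d b) = (if d \<in> E then qR d (v (fst d)) else 1)"
      unfolding f_def qR_def by auto
  qed
  also have "\<dots> = (\<Prod>d\<in>E. qR d (v (fst d)))"
    using prod_if_subset[OF Rdom_finite ER, of "\<lambda>d. qR d (v (fst d))"] by simp
  also have "\<dots> = (\<Prod>l\<in>J. qR (l, zz l) (v l))"
    unfolding E_def using prod.reindex[OF inj, of "\<lambda>d. qR d (v (fst d))"] by (simp add: e_def)
  finally show ?thesis .
qed

lemma PR_sum: "(\<Sum>R\<in>RS. PR R) = 1"
  using R_marg[of "{}"] by simp

definition fstage :: "(nat \<times> 'y list \<Rightarrow> bool) \<Rightarrow> 'y list \<Rightarrow> nat" where
  "fstage R ys = (if \<exists>l\<in>{1..k}. R (l, seg (2*l) ys) then (LEAST l. l \<in> {1..k} \<and> R (l, seg (2*l) ys)) else k+1)"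

lemma fstage_prop_aux:
  "fstage R ys \<in> {1..k+1} \<and> (\<forall>l\<in>{1..<fstage R ys}. \<not> R (l, seg (2*l) ys)) \<and>
     (fstage R ys \<le> k \<longrightarrow> R (fstage R ys, seg (2*fstage R ys) ys))"
proof (cases "\<exists>l\<in>{1..k}. R (l, seg (2*l) ys)")
  case True
  then obtain l0 where l0: "l0 \<in> {1..k} \<and> R (l0, seg (2*l0) ys)" by blast
  define m where "m = (LEAST l. l \<in> {1..k} \<and> R (l, seg (2*l) ys))"
  have fm: "fstage R ys = m" unfolding fstage_def m_def using True by simp
  have m: "m \<in> {1..k} \<and> R (m, seg (2*m) ys)" unfolding m_def by (rule LeastI[of _ l0]) (rule l0)
  have nm: "\<not> R (l, seg (2*l) ys)" if "l \<in> {1..<m}" for l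
  proof
    assume r: "R (l, seg (2*l) ys)"
    have "l \<in> {1..k}" using that m by simp
    then have "m \<le> l" unfolding m_def using r by (intro Least_le) simp
    then show False using that by simp
  qed
  show ?thesis unfolding fm using m nm by simp
next
  case False
  then have fm: "fstage R ys = k+1" unfolding fstage_def by simp
  have "\<not> R (l, seg (2*l) ys)" if "l \<in> {1..<k+1}" for l using False that by simp
  then show ?thesis unfolding fm by simp
qed

lemma fstage_prop:
  shows "fstage R ys \<in> {1..k+1}" "\<And>l. l \<in> {1..<fstage R ys} \<Longrightarrow> \<not> R (l, seg (2*l) ys)"
    "fstage R ys \<le> k \<Longrightarrow> R (fstage R ys, seg (2*fstage R ys) ys)"
  using fstage_prop_aux[of R ys] by blast+

lemma fstage_unique:
  assumes "m \<in> {1..k+1}" "\<And>l. l \<in> {1..<m} \<Longrightarrow> \<not> R (l, seg (2*l) ys)"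
    "m \<le> k \<Longrightarrow> R (m, seg (2*m) ys)"
  shows "fstage R ys = m"
proof -
  have a: "fstage R ys \<in> {1..k+1}" by (rule fstage_prop)
  show ?thesis
  proof (rule ccontr)
    assume ne: "fstage R ys \<noteq> m"
    then consider "fstage R ys < m" | "m < fstage R ys" by linarith
    then show False
    proof cases
      case 1
      then have "fstage R ys \<le> k" using assms(1) by auto
      then have "R (fstage R ys, seg (2*fstage R ys) ys)" by (rule fstage_prop)
      then show False using assms(2)[of "fstage R ys"] 1 a by auto
    next
      case 2
      then have "m \<le> k" using a by auto
      then show False using assms(3) fstage_prop(2)[of m R ys] 2 assms(1) by auto
    qed
  qed
qed

definition stp :: "nat \<Rightarrow> (nat \<Rightarrow> 'x list) \<times> (nat \<times> 'y list \<Rightarrow> bool) \<Rightarrow> 'y list \<Rightarrow> bool" where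
  "stp i u p = (even i \<and> snd u (i div 2, seg i p))"

definition gdec :: "nat \<Rightarrow> (nat \<Rightarrow> 'x list) \<times> (nat \<times> 'y list \<Rightarrow> bool) \<Rightarrow> 'y list \<Rightarrow> nat" where
  "gdec i u p = dec ((i+1) div 2) (fst u) p"

lemma NN_eq_n: "1 \<le> i \<Longrightarrow> i \<le> L \<Longrightarrow> NN i = n i" by (simp add: NN_def)

lemma stop_idx_eq:
  assumes ys: "length ys = NN L" and st: "\<And>i p. st i u p = stp i (C,R) p"
  shows "stop_idx L n st u ys = (if fstage R ys \<le> k then 2 * fstage R ys else L)"
proof -
  define m where "m = fstage R ys"
  define i0 where "i0 = (if m \<le> k then 2 * m else L)"
  have m: "m \<in> {1..k+1}" unfolding m_def by (rule fstage_prop)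
  have i0L: "i0 \<le> L" "1 \<le> i0" unfolding i0_def using m L_eq by auto
  have P: "1 \<le> i0 \<and> (i0 = L \<or> st i0 u (take (n i0) ys))"
  proof (cases "m \<le> k")
    case True
    have "n (2*m) = NN (2*m)" using True m L_eq by (simp add: NN_def)
    then have "seg (2*m) (take (n (2*m)) ys) = seg (2*m) ys"
      using seg_take[of "2*m" "NN (2*m)" ys] True m L_eq by simp
    moreover have "R (m, seg (2*m) ys)" using fstage_prop(3)[of R ys] True unfolding m_def by simp
    ultimately have "stp (2*m) (C,R) (take (n (2*m)) ys)" unfolding stp_def by simp
    then show ?thesis using True m unfolding i0_def by (simp add: st)
  next
    case False then show ?thesis unfolding i0_def using L_eq by simp
  qed
  have min: "i0 \<le> i" if i: "1 \<le> i \<and> (i = L \<or> st i u (take (n i) ys))" for i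
  proof (rule ccontr)
    assume lt: "\<not> i0 \<le> i"
    then have iL: "i < L" using i0L by simp
    then have stt: "stp i (C, R) (take (n i) ys)" using i st by auto
    then have ev: "even i" unfolding stp_def by simp
    then obtain l where l: "i = 2*l" by (elim evenE)
    have "n i = NN i" using i iL by (simp add: NN_def)
    then have "seg i (take (n i) ys) = seg i ys" using seg_take[of i "NN i" ys] i iL by simp
    then have Rl: "R (l, seg (2*l) ys)" using stt l by (simp add: stp_def)
    have "1 \<le> l" using i l by simp
    moreover have "l < m"
    proof (cases "m \<le> k")
      case True then show ?thesis using lt l unfolding i0_def by simp
    next
      case False then have "m = k+1" using m by simp
      then show ?thesis using iL l L_eq by simp
    qed
    ultimately have "l \<in> {1..<fstage R ys}" unfolding m_def by simp
    then show False using fstage_prop(2) Rl by blast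
  qed
  have "stop_idx L n st u ys = i0"
    unfolding stop_idx_def by (rule Least_equality) (use P min in auto)
  then show ?thesis unfolding i0_def m_def .
qed

lemma NN_mono_all: "i \<le> i' \<Longrightarrow> NN i \<le> NN i'"
proof -
  assume a: "i \<le> i'"
  have "NN j \<le> NN L" for j
  proof (cases "j \<le> L")
    case True then show ?thesis using NN_mono[of j L] by simp
  next
    case False then show ?thesis using L_eq by (simp add: NN_def)
  qed
  then show ?thesis using a NN_mono[of i i'] L_eq by (cases "i' \<le> L") (auto simp: NN_def)
qed

lemma telescope:
  assumes "1 \<le> m"
  shows "real (NN 2) + (\<Sum>j\<in>{1..<m}. real (NN (2*j+2) - NN (2*j))) = real (NN (2*m))"
  using assms
proof (induction m rule: nat_induct_at_least)
  case base then show ?case by simp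
next
  case (Suc m)
  have "{1..<Suc m} = insert m {1..<m}" using Suc by auto
  moreover have "NN (2*m) \<le> NN (2*m+2)" by (rule NN_mono_all) simp
  ultimately show ?case using Suc by (simp add: of_nat_diff)
qed

end


context scheme
begin

lemma dec_stop:
  assumes ys: "length ys = NN L" and m: "m \<in> {1..k+1}"
  defines "i \<equiv> (if m \<le> k then 2 * m else L)"
  shows "gdec i (C,R) (take (n i) ys) = decx m C (Dcat m ys)"
proof -
  have i: "(i+1) div 2 = m" "1 \<le> i" "i \<le> L" "2*m - 1 \<le> i" using m L_eq unfolding i_def by auto
  have "n i = NN i" using i by (simp add: NN_def)
  moreover have "NN (2*m-1) \<le> NN i" using NN_mono[of "2*m-1" i] i by simp
  ultimately have "Dcat m (take (n i) ys) = Dcat m ys" using Dcat_take[of m "n i" ys] m by simp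
  then show ?thesis unfolding gdec_def dec_def using i by simp
qed

lemma err_path:
  assumes ys: "length ys = NN L" and st: "\<And>i p. st i u p = stp i (C,R) p"
    and g: "\<And>i p. gg i u p = gdec i (C,R) p"
  shows "(let i = stop_idx L n st u ys in if gg i u (take (n i) ys) \<noteq> w then 1 else 0::real)
     = (\<Sum>j\<in>{1..k+1}. (if fstage R ys = j then 1 else 0) * (if decx j C (Dcat j ys) \<noteq> w then 1 else 0))"
proof -
  define m where "m = fstage R ys"
  have m: "m \<in> {1..k+1}" unfolding m_def by (rule fstage_prop)
  have "(\<Sum>j\<in>{1..k+1}. (if fstage R ys = j then 1 else 0) * (if decx j C (Dcat j ys) \<noteq> w then 1 else 0::real))
     = (\<Sum>j\<in>{1..k+1}. if j = m then (if decx j C (Dcat j ys) \<noteq> w then 1 else 0) else 0)"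
    unfolding m_def by (intro sum.cong refl) auto
  also have "\<dots> = (if decx m C (Dcat m ys) \<noteq> w then 1 else 0)" using m by (simp add: sum.delta)
  finally have r: "(\<Sum>j\<in>{1..k+1}. (if fstage R ys = j then 1 else 0) * (if decx j C (Dcat j ys) \<noteq> w then 1 else 0::real))
      = (if decx m C (Dcat m ys) \<noteq> w then 1 else 0)" .
  have "stop_idx L n st u ys = (if m \<le> k then 2 * m else L)"
    unfolding m_def by (rule stop_idx_eq[OF ys]) (rule st)
  then show ?thesis using r dec_stop[OF ys m, of C R] g by (simp add: Let_def)
qed

lemma tau_path:
  assumes ys: "length ys = NN L" and st: "\<And>i p. st i u p = stp i (C,R) p"
  shows "real (n (stop_idx L n st u ys)) =
     real (NN 2) + (\<Sum>j\<in>{1..k}. real (NN (2*j+2) - NN (2*j)) * (if j < fstage R ys then 1 else 0))"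
proof -
  define m where "m = fstage R ys"
  have m: "m \<in> {1..k+1}" unfolding m_def by (rule fstage_prop)
  have "(\<Sum>j\<in>{1..k}. real (NN (2*j+2) - NN (2*j)) * (if j < m then 1 else 0))
      = (\<Sum>j\<in>{1..k}. if j < m then real (NN (2*j+2) - NN (2*j)) else 0)"
    by (intro sum.cong refl) auto
  also have "\<dots> = (\<Sum>j\<in>{j\<in>{1..k}. j < m}. real (NN (2*j+2) - NN (2*j)))"
    by (rule sum.inter_filter[symmetric]) simp
  also have "{j\<in>{1..k}. j < m} = {1..<m}" using m by auto
  finally have s1: "(\<Sum>j\<in>{1..k}. real (NN (2*j+2) - NN (2*j)) * (if j < m then 1 else 0))
      = (\<Sum>j\<in>{1..<m}. real (NN (2*j+2) - NN (2*j)))" .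
  have "n (if m \<le> k then 2 * m else L) = NN (2*m)"
    using m L_eq by (auto simp: NN_def)
  moreover have "stop_idx L n st u ys = (if m \<le> k then 2 * m else L)"
    unfolding m_def by (rule stop_idx_eq[OF ys]) (rule st)
  ultimately show ?thesis using s1 telescope[of m] m unfolding m_def by simp
qed

lemma length_seg_ys:
  assumes "length ys = NN L" "1 \<le> l" "l \<le> k"
  shows "length (seg (2*l) ys) = len (2*l)"
  using length_seg[of "2*l" ys] NN_mono[of "2*l" L] assms L_eq by simp

lemma avg_eq:
  assumes ys: "length ys = NN L" and j: "1 \<le> j" "j \<le> k"
  shows "(\<Sum>R\<in>RS. PR R * (if fstage R ys = j then 1 else 0)) =
     (\<Prod>l\<in>{1..<j}. 1 - T l (seg (2*l) ys)) * T j (seg (2*j) ys)"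
proof -
  have ind: "(if fstage R ys = j then 1 else 0) = (\<Prod>l\<in>{1..j}. if R (l, seg (2*l) ys) = (l = j) then 1 else 0::real)" for R
  proof -
    have "fstage R ys = j \<longleftrightarrow> (\<forall>l\<in>{1..j}. R (l, seg (2*l) ys) = (l = j))"
    proof
      assume f: "fstage R ys = j"
      show "\<forall>l\<in>{1..j}. R (l, seg (2*l) ys) = (l = j)"
        using fstage_prop(2)[of _ R ys] fstage_prop(3)[of R ys] f j by force
    next
      assume a: "\<forall>l\<in>{1..j}. R (l, seg (2*l) ys) = (l = j)"
      show "fstage R ys = j" using a j by (intro fstage_unique) auto
    qed
    then show ?thesis by (simp add: prod_ind)
  qed
  have "(\<Sum>R\<in>RS. PR R * (if fstage R ys = j then 1 else 0)) = (\<Prod>l\<in>{1..j}. qR (l, seg (2*l) ys) (l = j))"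
    unfolding ind using j length_seg_ys[OF ys] by (intro R_marg) auto
  also have "\<dots> = qR (j, seg (2*j) ys) True * (\<Prod>l\<in>{1..<j}. qR (l, seg (2*l) ys) False)"
  proof -
    have "{1..j} = insert j {1..<j}" using j by auto
    moreover have "(\<Prod>l\<in>{1..<j}. qR (l, seg (2*l) ys) (l = j)) = (\<Prod>l\<in>{1..<j}. qR (l, seg (2*l) ys) False)"
      by (intro prod.cong) auto
    ultimately show ?thesis by simp
  qed
  finally show ?thesis by (simp add: qR_def mult_ac)
qed

lemma avg_last:
  assumes ys: "length ys = NN L"
  shows "(\<Sum>R\<in>RS. PR R * (if fstage R ys = k+1 then 1 else 0)) = (\<Prod>l\<in>{1..<k+1}. 1 - T l (seg (2*l) ys))"
proof -
  have ind: "(if fstage R ys = k+1 then 1 else 0) = (\<Prod>l\<in>{1..k}. if R (l, seg (2*l) ys) = False then 1 else 0::real)" for R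
  proof -
    have "fstage R ys = k+1 \<longleftrightarrow> (\<forall>l\<in>{1..k}. R (l, seg (2*l) ys) = False)"
    proof
      assume f: "fstage R ys = k+1"
      show "\<forall>l\<in>{1..k}. R (l, seg (2*l) ys) = False"
        using fstage_prop(2)[of _ R ys] f by force
    next
      assume a: "\<forall>l\<in>{1..k}. R (l, seg (2*l) ys) = False"
      show "fstage R ys = k+1" using a k_pos by (intro fstage_unique) auto
    qed
    then show ?thesis by (simp add: prod_ind)
  qed
  have "(\<Sum>R\<in>RS. PR R * (if fstage R ys = k+1 then 1 else 0)) = (\<Prod>l\<in>{1..k}. qR (l, seg (2*l) ys) False)"
    unfolding ind using length_seg_ys[OF ys] by (intro R_marg) auto
  also have "{1..k} = {1..<k+1}" by auto
  finally show ?thesis by (simp add: qR_def)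
qed

lemma avg_gt:
  assumes ys: "length ys = NN L" and j: "1 \<le> j" "j \<le> k"
  shows "(\<Sum>R\<in>RS. PR R * (if j < fstage R ys then 1 else 0)) =
     (\<Prod>l\<in>{1..<j}. 1 - T l (seg (2*l) ys)) * (1 - T j (seg (2*j) ys))"
proof -
  have ind: "(if j < fstage R ys then 1 else 0) = (\<Prod>l\<in>{1..j}. if R (l, seg (2*l) ys) = False then 1 else 0::real)" for R
  proof -
    have "j < fstage R ys \<longleftrightarrow> (\<forall>l\<in>{1..j}. R (l, seg (2*l) ys) = False)"
    proof
      assume f: "j < fstage R ys"
      show "\<forall>l\<in>{1..j}. R (l, seg (2*l) ys) = False"
        using fstage_prop(2)[of _ R ys] f by force
    next
      assume a: "\<forall>l\<in>{1..j}. R (l, seg (2*l) ys) = False"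
      show "j < fstage R ys"
      proof (rule ccontr)
        assume "\<not> j < fstage R ys"
        then have "fstage R ys \<le> k" "fstage R ys \<in> {1..j}" using j fstage_prop(1)[of R ys] by auto
        then show False using a fstage_prop(3)[of R ys] by auto
      qed
    qed
    then show ?thesis by (simp add: prod_ind)
  qed
  have "(\<Sum>R\<in>RS. PR R * (if j < fstage R ys then 1 else 0)) = (\<Prod>l\<in>{1..j}. qR (l, seg (2*l) ys) False)"
    unfolding ind using j length_seg_ys[OF ys] by (intro R_marg) auto
  also have "\<dots> = qR (j, seg (2*j) ys) False * (\<Prod>l\<in>{1..<j}. qR (l, seg (2*l) ys) False)"
  proof -
    have "{1..j} = insert j {1..<j}" using j by auto
    then show ?thesis by simp
  qed
  finally show ?thesis by (simp add: qR_def mult_ac)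
qed

end


context scheme
begin

definition CB :: "(nat \<Rightarrow> 'x list) set" where
  "CB = PiE {1..M} (\<lambda>_. seqs S)"

definition PC :: "(nat \<Rightarrow> 'x list) \<Rightarrow> real" where
  "PC C = (\<Prod>v\<in>{1..M}. iid PX (C v))"

lemma CB_finite: "finite CB"
  unfolding CB_def by (intro finite_PiE) (auto intro: seqs_finite)

lemma PC_nonneg: "0 \<le> PC C"
  unfolding PC_def by (intro prod_nonneg iid_nonneg PX_nonneg)

lemma PC_sum_gen:
  assumes "\<And>v. v \<in> {1..M} \<Longrightarrow> finite (A v)"
  shows "(\<Sum>C\<in>PiE {1..M} A. PC C * (\<Prod>v\<in>{1..M}. h v (C v))) = (\<Prod>v\<in>{1..M}. \<Sum>b\<in>A v. iid PX b * h v b)"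
proof -
  have "(\<Sum>C\<in>PiE {1..M} A. PC C * (\<Prod>v\<in>{1..M}. h v (C v))) = (\<Sum>C\<in>PiE {1..M} A. \<Prod>v\<in>{1..M}. iid PX (C v) * h v (C v))"
    unfolding PC_def by (simp add: prod.distrib)
  also have "\<dots> = (\<Prod>v\<in>{1..M}. \<Sum>b\<in>A v. iid PX b * h v b)"
    by (rule prod_sum_PiE[symmetric]) (use assms in auto)
  finally show ?thesis .
qed

lemma PC_sum: "(\<Sum>C\<in>CB. PC C) = 1"
proof -
  have "(\<Sum>C\<in>CB. PC C) = (\<Sum>C\<in>CB. PC C * (\<Prod>v\<in>{1..M}. (\<lambda>_ _. 1::real) v (C v)))" by simp
  also have "\<dots> = (\<Prod>v\<in>{1..M}. \<Sum>b\<in>seqs S. iid PX b * 1)"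
    unfolding CB_def by (rule PC_sum_gen) (rule seqs_finite)
  also have "\<dots> = 1" using sum_iid[OF PX_sum] by simp
  finally show ?thesis .
qed

definition ind :: "nat \<Rightarrow> 'x list \<Rightarrow> 'x list \<Rightarrow> 'y list \<Rightarrow> real" where
  "ind j b c x = (if iota j c x \<le> iota j b x then 1 else 0)"

lemma wrong_le:
  assumes w: "w \<in> {1..M}"
  shows "(if decx j C x \<noteq> w then 1 else 0::real) \<le> min 1 (\<Sum>w'\<in>{1..M}-{w}. ind j (C w') (C w) x)"
proof (cases "decx j C x = w")
  case True
  then show ?thesis by (simp add: ind_def sum_nonneg)
next
  case False
  let ?d = "decx j C x"
  have d: "?d \<in> {1..M}-{w}" using decx_in False by simp
  have "ind j (C ?d) (C w) x = 1" using decx_max[OF w] unfolding ind_def by simp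
  then have "1 \<le> (\<Sum>w'\<in>{1..M}-{w}. ind j (C w') (C w) x)"
    using member_le_sum[OF d, of "\<lambda>w'. ind j (C w') (C w) x"] by (simp add: ind_def)
  then show ?thesis using False by simp
qed

end


context scheme
begin

lemma PiE_slice:
  assumes w: "w \<in> {1..M}" and c: "c \<in> seqs S"
  shows "{C \<in> CB. C w = c} = PiE {1..M} (\<lambda>v. if v = w then {c} else seqs S)"
proof (rule set_eqI)
  fix C :: "nat \<Rightarrow> 'x list"
  show "C \<in> {C \<in> CB. C w = c} \<longleftrightarrow> C \<in> PiE {1..M} (\<lambda>v. if v = w then {c} else seqs S)"
  proof
    assume "C \<in> {C \<in> CB. C w = c}"
    then have a: "\<forall>i\<in>{1..M}. C i \<in> seqs S" "C \<in> extensional {1..M}" "C w = c"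
      unfolding CB_def PiE_iff by auto
    then have "\<forall>i\<in>{1..M}. C i \<in> (if i = w then {c} else seqs S)" by auto
    then show "C \<in> PiE {1..M} (\<lambda>v. if v = w then {c} else seqs S)" using a(2) unfolding PiE_iff by blast
  next
    assume "C \<in> PiE {1..M} (\<lambda>v. if v = w then {c} else seqs S)"
    then have a: "\<forall>i\<in>{1..M}. C i \<in> (if i = w then {c} else seqs S)" "C \<in> extensional {1..M}"
      unfolding PiE_iff by auto
    then have "\<forall>i\<in>{1..M}. C i \<in> seqs S" using c by (metis singletonD)
    moreover have "C w \<in> (if w = w then {c} else seqs S)" using a(1) w by blast
    then have "C w = c" by simp
    ultimately show "C \<in> {C \<in> CB. C w = c}" using a(2) unfolding CB_def PiE_iff by blast
  qed
qed

lemma slice_sum1: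
  assumes w: "w \<in> {1..M}"
  shows "(\<Sum>C\<in>PiE {1..M} (\<lambda>v. if v = w then {c} else seqs S). PC C) = iid PX c"
proof -
  have "(\<Sum>C\<in>PiE {1..M} (\<lambda>v. if v = w then {c} else seqs S). PC C) =
     (\<Sum>C\<in>PiE {1..M} (\<lambda>v. if v = w then {c} else seqs S). PC C * (\<Prod>v\<in>{1..M}. (\<lambda>_ _. 1::real) v (C v)))"
    by simp
  also have "\<dots> = (\<Prod>v\<in>{1..M}. \<Sum>b\<in>(if v = w then {c} else seqs S). iid PX b * 1)"
    by (rule PC_sum_gen) (auto intro: seqs_finite)
  also have "\<dots> = (\<Prod>v\<in>{1..M}. if v = w then iid PX c else 1)"
    by (intro prod.cong refl) (auto simp: sum_iid[OF PX_sum])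
  also have "\<dots> = iid PX c" using w by (simp add: prod.delta')
  finally show ?thesis .
qed

lemma slice_sum2:
  assumes w: "w \<in> {1..M}" and w': "w' \<in> {1..M}" "w' \<noteq> w"
  shows "(\<Sum>C\<in>PiE {1..M} (\<lambda>v. if v = w then {c} else seqs S). PC C * f (C w')) =
     iid PX c * (\<Sum>b\<in>seqs S. iid PX b * f b)"
proof -
  have "(\<Sum>C\<in>PiE {1..M} (\<lambda>v. if v = w then {c} else seqs S). PC C * f (C w')) =
     (\<Sum>C\<in>PiE {1..M} (\<lambda>v. if v = w then {c} else seqs S). PC C * (\<Prod>v\<in>{1..M}. (\<lambda>v b. if v = w' then f b else 1) v (C v)))"
    using w' by (simp add: prod.delta')
  also have "\<dots> = (\<Prod>v\<in>{1..M}. \<Sum>b\<in>(if v = w then {c} else seqs S). iid PX b * (if v = w' then f b else 1))"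
    by (rule PC_sum_gen) (auto intro: seqs_finite)
  also have "\<dots> = (\<Prod>v\<in>{1..M}. (if v = w then iid PX c else 1) * (if v = w' then (\<Sum>b\<in>seqs S. iid PX b * f b) else 1))"
    using w' by (intro prod.cong refl) (auto simp: sum_iid[OF PX_sum])
  also have "\<dots> = iid PX c * (\<Sum>b\<in>seqs S. iid PX b * f b)"
    using w w' by (simp add: prod.distrib prod.delta')
  finally show ?thesis .
qed

lemma rcu_w:
  assumes j: "1 \<le> j" "j \<le> k+1" and w: "w \<in> {1..M}"
  shows "(\<Sum>C\<in>CB. PC C * (\<Sum>x\<in>seqs (s j). chan_n W (take (s j) (C w)) x * (if decx j C x \<noteq> w then 1 else 0)))
     \<le> rcu W PX (s j) M"
proof -
  define Q where "Q c x = (\<Sum>b\<in>seqs S. iid PX b * ind j b c x)" for c x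
  define F where "F C = (\<Sum>x\<in>seqs (s j). chan_n W (take (s j) (C w)) x * min 1 (\<Sum>w'\<in>{1..M}-{w}. ind j (C w') (C w) x))" for C
  define A where "A (c::'x list) = PiE {1..M} (\<lambda>v. if v = w then {c} else seqs S)" for c
  have ind_nonneg: "0 \<le> ind j b c x" for b c x by (simp add: ind_def)
  have "(\<Sum>C\<in>CB. PC C * (\<Sum>x\<in>seqs (s j). chan_n W (take (s j) (C w)) x * (if decx j C x \<noteq> w then 1 else 0)))
      \<le> (\<Sum>C\<in>CB. PC C * F C)"
    unfolding F_def
    by (intro sum_mono mult_left_mono PC_nonneg chan_n_nonneg W_nonneg wrong_le[OF w])
  also have "\<dots> = (\<Sum>c\<in>seqs S. \<Sum>C\<in>{C\<in>CB. C w = c}. PC C * F C)"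
    by (rule sum.group[symmetric]) (use CB_finite seqs_finite w in \<open>auto simp: CB_def\<close>)
  also have "\<dots> = (\<Sum>c\<in>seqs S. \<Sum>x\<in>seqs (s j). chan_n W (take (s j) c) x *
       (\<Sum>C\<in>A c. PC C * min 1 (\<Sum>w'\<in>{1..M}-{w}. ind j (C w') c x)))"
  proof (intro sum.cong refl)
    fix c :: "'x list" assume c: "c \<in> seqs S"
    have "(\<Sum>C\<in>{C\<in>CB. C w = c}. PC C * F C) = (\<Sum>C\<in>A c. PC C *
        (\<Sum>x\<in>seqs (s j). chan_n W (take (s j) c) x * min 1 (\<Sum>w'\<in>{1..M}-{w}. ind j (C w') c x)))"
      unfolding PiE_slice[OF w c] A_def F_def
    proof (intro sum.cong refl)
      fix C assume "C \<in> PiE {1..M} (\<lambda>v. if v = w then {c} else seqs S)"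
      then have "C w \<in> (if w = w then {c} else seqs S)" using w by blast
      then have "C w = c" by simp
      then show "PC C * (\<Sum>x\<in>seqs (s j). chan_n W (take (s j) (C w)) x * min 1 (\<Sum>w'\<in>{1..M}-{w}. ind j (C w') (C w) x)) =
         PC C * (\<Sum>x\<in>seqs (s j). chan_n W (take (s j) c) x * min 1 (\<Sum>w'\<in>{1..M}-{w}. ind j (C w') c x))" by simp
    qed
    also have "\<dots> = (\<Sum>x\<in>seqs (s j). chan_n W (take (s j) c) x *
       (\<Sum>C\<in>A c. PC C * min 1 (\<Sum>w'\<in>{1..M}-{w}. ind j (C w') c x)))"
      by (simp add: sum_distrib_left sum_distrib_right mult_ac sum.swap[of _ "A c"])
    finally show "(\<Sum>C\<in>{C\<in>CB. C w = c}. PC C * F C) = (\<Sum>x\<in>seqs (s j). chan_n W (take (s j) c) x *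
       (\<Sum>C\<in>A c. PC C * min 1 (\<Sum>w'\<in>{1..M}-{w}. ind j (C w') c x)))" .
  qed
  also have "\<dots> \<le> (\<Sum>c\<in>seqs S. \<Sum>x\<in>seqs (s j). chan_n W (take (s j) c) x *
       (iid PX c * min 1 ((real M - 1) * Q c x)))"
  proof (intro sum_mono mult_left_mono chan_n_nonneg W_nonneg)
    fix c :: "'x list" and x :: "'y list"
    have s1: "(\<Sum>C\<in>A c. PC C) = iid PX c" unfolding A_def by (rule slice_sum1[OF w])
    have s2: "(\<Sum>C\<in>A c. PC C * (\<Sum>w'\<in>{1..M}-{w}. ind j (C w') c x)) = (real M - 1) * (iid PX c * Q c x)"
    proof -
      have "(\<Sum>C\<in>A c. PC C * (\<Sum>w'\<in>{1..M}-{w}. ind j (C w') c x)) =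
          (\<Sum>w'\<in>{1..M}-{w}. \<Sum>C\<in>A c. PC C * ind j (C w') c x)"
        by (simp add: sum_distrib_left sum.swap[of _ "A c"])
      also have "\<dots> = (\<Sum>w'\<in>{1..M}-{w}. iid PX c * Q c x)"
        unfolding A_def Q_def by (intro sum.cong refl slice_sum2[OF w]) auto
      also have "\<dots> = real (card ({1..M}-{w})) * (iid PX c * Q c x)" by simp
      also have "card ({1..M}-{w}) = M - 1" using w by simp
      finally show ?thesis using M by (simp add: of_nat_diff)
    qed
    have "(\<Sum>C\<in>A c. PC C * min 1 (\<Sum>w'\<in>{1..M}-{w}. ind j (C w') c x)) \<le> iid PX c"
      unfolding s1[symmetric] by (intro sum_mono mult_right_le_one_le PC_nonneg) (auto intro: sum_nonneg ind_nonneg)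
    moreover have "(\<Sum>C\<in>A c. PC C * min 1 (\<Sum>w'\<in>{1..M}-{w}. ind j (C w') c x)) \<le> (real M - 1) * (iid PX c * Q c x)"
      unfolding s2[symmetric] by (intro sum_mono mult_left_mono PC_nonneg) auto
    ultimately have "(\<Sum>C\<in>A c. PC C * min 1 (\<Sum>w'\<in>{1..M}-{w}. ind j (C w') c x))
        \<le> min (iid PX c) ((real M - 1) * (iid PX c * Q c x))" by simp
    also have "\<dots> = iid PX c * min 1 ((real M - 1) * Q c x)"
      using iid_nonneg[OF PX_nonneg, where xs=c] by (simp add: min_mult_distrib_left mult_ac)
    finally show "(\<Sum>C\<in>A c. PC C * min 1 (\<Sum>w'\<in>{1..M}-{w}. ind j (C w') c x)) \<le> iid PX c * min 1 ((real M - 1) * Q c x)" .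
  qed
  also have "\<dots> = (\<Sum>c\<in>seqs S. iid PX c * (\<lambda>c'. \<Sum>x\<in>seqs (s j). chan_n W c' x * min 1 ((real M - 1) *
        (\<Sum>b\<in>seqs (s j). iid PX b * (if info_dens W PX (s j) b x \<ge> info_dens W PX (s j) c' x then 1 else 0)))) (take (s j) c))"
  proof (intro sum.cong refl)
    fix c :: "'x list" assume c: "c \<in> seqs S"
    have "Q c x = (\<Sum>b\<in>seqs (s j). iid PX b * (if info_dens W PX (s j) b x \<ge> info_dens W PX (s j) (take (s j) c) x then 1 else 0))" for x
      unfolding Q_def ind_def iota_def
      using sum_iid_take[OF PX_sum s_le_S[OF j(2)], where G="\<lambda>b. if info_dens W PX (s j) b x \<ge> info_dens W PX (s j) (take (s j) c) x then 1 else 0"]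
      by simp
    then show "(\<Sum>x\<in>seqs (s j). chan_n W (take (s j) c) x * (iid PX c * min 1 ((real M - 1) * Q c x))) =
      iid PX c * (\<lambda>c'. \<Sum>x\<in>seqs (s j). chan_n W c' x * min 1 ((real M - 1) *
        (\<Sum>b\<in>seqs (s j). iid PX b * (if info_dens W PX (s j) b x \<ge> info_dens W PX (s j) c' x then 1 else 0)))) (take (s j) c)"
      by (simp add: sum_distrib_left mult_ac)
  qed
  also have "\<dots> = (\<Sum>c\<in>seqs (s j). iid PX c * (\<lambda>c'. \<Sum>x\<in>seqs (s j). chan_n W c' x * min 1 ((real M - 1) *
        (\<Sum>b\<in>seqs (s j). iid PX b * (if info_dens W PX (s j) b x \<ge> info_dens W PX (s j) c' x then 1 else 0)))) c)"
    by (rule sum_iid_take[OF PX_sum s_le_S[OF j(2)]])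
  also have "\<dots> = rcu W PX (s j) M"
    unfolding rcu_def by (simp add: sum_distrib_left mult_ac)
  finally show ?thesis .
qed

definition Perr :: "nat \<Rightarrow> real" where
  "Perr j = (\<Sum>C\<in>CB. PC C * (1 / real M * (\<Sum>w\<in>{1..M}. \<Sum>x\<in>seqs (s j). chan_n W (take (s j) (C w)) x * (if decx j C x \<noteq> w then 1 else 0))))"

lemma Perr_le:
  assumes j: "1 \<le> j" "j \<le> k+1"
  shows "Perr j \<le> rcu W PX (s j) M"
proof -
  have "Perr j = 1 / real M * (\<Sum>w\<in>{1..M}. \<Sum>C\<in>CB. PC C * (\<Sum>x\<in>seqs (s j). chan_n W (take (s j) (C w)) x * (if decx j C x \<noteq> w then 1 else 0)))"
    unfolding Perr_def by (simp add: sum_distrib_left sum.swap[of _ CB] mult_ac)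
  also have "\<dots> \<le> 1 / real M * (\<Sum>w\<in>{1..M}. rcu W PX (s j) M)"
    by (intro mult_left_mono sum_mono rcu_w[OF j]) auto
  also have "\<dots> = rcu W PX (s j) M" using M by simp
  finally show ?thesis .
qed

lemma Perr_nonneg: "0 \<le> Perr j"
  unfolding Perr_def
  by (intro sum_nonneg mult_nonneg_nonneg PC_nonneg chan_n_nonneg W_nonneg) auto

end


locale scheme_T = scheme W PX xA xR L M n eps T
  for W :: "'x::finite \<Rightarrow> 'y::finite \<Rightarrow> real"
    and PX :: "'x \<Rightarrow> real"
    and xA xR :: 'x
    and L M :: nat
    and n :: "nat \<Rightarrow> nat"
    and eps :: "nat \<Rightarrow> real"
    and T :: "nat \<Rightarrow> 'y list \<Rightarrow> real" +
  assumes T01: "\<And>l z. 0 \<le> T l z \<and> T l z \<le> 1"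
    and typeI: "\<And>l. 1 \<le> l \<Longrightarrow> l \<le> k \<Longrightarrow> (\<Sum>z\<in>seqs (len (2*l)). chan_pow W xA z * (1 - T l z)) \<le> eps l"
    and eps_pos: "\<And>l. 1 \<le> l \<Longrightarrow> l \<le> k \<Longrightarrow> 0 \<le> eps l"
begin

definition beta :: "nat \<Rightarrow> real" where
  "beta l = (\<Sum>z\<in>seqs (len (2*l)). chan_pow W xR z * T l z)"

definition pp :: "nat \<Rightarrow> real" where
  "pp l = (if l = 0 then 1 else max (eps l) (1 - beta l))"

lemma beta_01: "0 \<le> beta l" "beta l \<le> 1"
proof -
  show "0 \<le> beta l" unfolding beta_def using T01 by (intro sum_nonneg mult_nonneg_nonneg chan_pow_nonneg W_nonneg) auto
  have "beta l \<le> (\<Sum>z\<in>seqs (len (2*l)). chan_pow W xR z)"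
    unfolding beta_def using T01 by (intro sum_mono mult_right_le_one_le chan_pow_nonneg W_nonneg) auto
  then show "beta l \<le> 1" using sum_chan_pow[of W, OF W_sum] by simp
qed

lemma sum_R_compl: "(\<Sum>z\<in>seqs (len (2*l)). chan_pow W xR z * (1 - T l z)) = 1 - beta l"
  unfolding beta_def using sum_chan_pow[where W=W and m="len (2*l)" and x=xR, OF W_sum]
  by (simp add: algebra_simps sum_subtractf)

lemma pp_nonneg: "1 \<le> l \<Longrightarrow> l \<le> k \<Longrightarrow> 0 \<le> pp l"
  unfolding pp_def using eps_pos beta_01 by (auto simp: max_def)

lemma phi_theta:
  assumes "1 \<le> l" "l < j" "j \<le> k+1"
  shows "(\<Sum>z\<in>seqs (len (2*l)). chan_pow W (xsym l C w p) z * (1 - T l z)) \<le> pp l"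
proof (cases "dec l C p = w")
  case True
  then show ?thesis using typeI[of l] assms unfolding xsym_def pp_def by (simp add: le_max_iff_disj)
next
  case False
  then show ?thesis using sum_R_compl[of l] assms unfolding xsym_def pp_def by simp
qed

definition Ew :: "nat \<Rightarrow> (nat \<Rightarrow> 'x list) \<Rightarrow> nat \<Rightarrow> real" where
  "Ew j C w = (\<Sum>x\<in>seqs (s j). chan_n W (take (s j) (C w)) x * (if decx j C x \<noteq> w then 1 else 0))"

definition Ei :: "nat \<Rightarrow> (nat \<Rightarrow> 'x list) \<Rightarrow> nat \<Rightarrow> 'y list \<Rightarrow> real" where
  "Ei j C w ys = (if decx j C (Dcat j ys) \<noteq> w then 1 else 0)"

definition ErrR :: "(nat \<Rightarrow> 'x list) \<Rightarrow> nat \<Rightarrow> 'y list \<Rightarrow> real" where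
  "ErrR C w ys = (\<Sum>j\<in>{1..k}. ((\<Prod>l\<in>{1..<j}. 1 - T l (seg (2*l) ys)) * T j (seg (2*j) ys)) * Ei j C w ys)
     + (\<Prod>l\<in>{1..<k+1}. 1 - T l (seg (2*l) ys)) * Ei (k+1) C w ys"

definition TauR :: "'y list \<Rightarrow> real" where
  "TauR ys = real (NN 2) + (\<Sum>j\<in>{1..k}. real (NN (2*j+2) - NN (2*j)) *
      ((\<Prod>l\<in>{1..<j}. 1 - T l (seg (2*l) ys)) * (1 - T j (seg (2*j) ys))))"

lemma C_len: "C \<in> CB \<Longrightarrow> w \<in> {1..M} \<Longrightarrow> length (C w) = S"
  unfolding CB_def by (auto simp: PiE_iff)

lemma err_cw:
  assumes C: "C \<in> CB" and w: "w \<in> {1..M}"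
  shows "(\<Sum>ys\<in>seqs (NN L). PPe (C,R0) w (NN L) ys * ErrR C w ys) \<le>
     (\<Sum>j\<in>{1..k}. (\<Prod>l\<in>{1..<j}. pp l) * beta j * Ew j C w) + (\<Prod>l\<in>{1..<k+1}. pp l) * Ew (k+1) C w"
proof -
  let ?u = "(C, R0)"
  have c: "length (fst ?u w) = S" using C_len[OF C w] by simp
  have phi_nonneg: "0 \<le> 1 - T l z" for l z using T01[of l z] by simp
  have stage: "(\<Sum>ys\<in>seqs (NN L). PPe ?u w (NN L) ys * (((\<Prod>l\<in>{1..<j}. 1 - T l (seg (2*l) ys)) * T j (seg (2*j) ys)) * Ei j C w ys))
      \<le> (\<Prod>l\<in>{1..<j}. pp l) * beta j * Ew j C w" if j: "1 \<le> j" "j \<le> k" for j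
  proof -
    have "(\<Sum>ys\<in>seqs (NN L). PPe ?u w (NN L) ys * (((\<Prod>l\<in>{1..<j}. 1 - T l (seg (2*l) ys)) * T j (seg (2*j) ys)) * Ei j C w ys))
      = (\<Sum>ys\<in>seqs (NN L). PPe ?u w (NN L) ys * ((\<Prod>l\<in>{1..<j}. 1 - T l (seg (2*l) ys)) *
            (\<lambda>x z. T j z * (if decx j C x \<noteq> w then 1 else 0)) (Dcat j ys) (seg (2*j) ys)))"
      unfolding Ei_def by (simp add: mult_ac)
    also have "\<dots> \<le> (\<Prod>l\<in>{1..<j}. pp l) * (\<Sum>x\<in>seqs (s j). chan_n W (take (s j) (fst ?u w)) x *
          (\<Sum>z\<in>seqs (len (2*j)). chan_pow W (if decx j (fst ?u) x = w then xA else xR) z *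
            (\<lambda>x z. T j z * (if decx j C x \<noteq> w then 1 else 0)) x z))"
      by (rule Tstage[OF j c]) (use phi_nonneg phi_theta j T01 in auto)
    also have "\<dots> = (\<Prod>l\<in>{1..<j}. pp l) * (\<Sum>x\<in>seqs (s j). chan_n W (take (s j) (C w)) x *
          (beta j * (if decx j C x \<noteq> w then 1 else 0)))"
      by (intro arg_cong2[where f="(*)"] sum.cong refl) (auto simp: beta_def sum_distrib_right mult_ac)
    also have "\<dots> = (\<Prod>l\<in>{1..<j}. pp l) * beta j * Ew j C w"
      unfolding Ew_def by (simp add: sum_distrib_left mult_ac)
    finally show ?thesis .
  qed
  have final: "(\<Sum>ys\<in>seqs (NN L). PPe ?u w (NN L) ys * ((\<Prod>l\<in>{1..<k+1}. 1 - T l (seg (2*l) ys)) * Ei (k+1) C w ys))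
      \<le> (\<Prod>l\<in>{1..<k+1}. pp l) * Ew (k+1) C w"
  proof -
    have "(\<Sum>ys\<in>seqs (NN L). PPe ?u w (NN L) ys * ((\<Prod>l\<in>{1..<k+1}. 1 - T l (seg (2*l) ys)) * Ei (k+1) C w ys))
       \<le> (\<Prod>l\<in>{1..<k+1}. pp l) * (\<Sum>x\<in>seqs (s (k+1)). chan_n W (take (s (k+1)) (fst ?u w)) x *
            (\<lambda>x. if decx (k+1) C x \<noteq> w then 1 else 0) x)"
      unfolding Ei_def
      by (rule Fstage[OF c, where H="\<lambda>x. if decx (k+1) C x \<noteq> w then 1 else 0"]) (use phi_nonneg phi_theta in auto)
    then show ?thesis unfolding Ew_def by simp
  qed
  have "(\<Sum>ys\<in>seqs (NN L). PPe ?u w (NN L) ys * ErrR C w ys) =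
     (\<Sum>j\<in>{1..k}. \<Sum>ys\<in>seqs (NN L). PPe ?u w (NN L) ys * (((\<Prod>l\<in>{1..<j}. 1 - T l (seg (2*l) ys)) * T j (seg (2*j) ys)) * Ei j C w ys))
     + (\<Sum>ys\<in>seqs (NN L). PPe ?u w (NN L) ys * ((\<Prod>l\<in>{1..<k+1}. 1 - T l (seg (2*l) ys)) * Ei (k+1) C w ys))"
  proof -
    have "(\<Sum>ys\<in>seqs (NN L). PPe ?u w (NN L) ys * ErrR C w ys) =
     (\<Sum>ys\<in>seqs (NN L). \<Sum>j\<in>{1..k}. PPe ?u w (NN L) ys * (((\<Prod>l\<in>{1..<j}. 1 - T l (seg (2*l) ys)) * T j (seg (2*j) ys)) * Ei j C w ys))
     + (\<Sum>ys\<in>seqs (NN L). PPe ?u w (NN L) ys * ((\<Prod>l\<in>{1..<k+1}. 1 - T l (seg (2*l) ys)) * Ei (k+1) C w ys))"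
      unfolding ErrR_def distrib_left sum.distrib sum_distrib_left by (simp only: mult.assoc)
    then show ?thesis by (simp only: sum.swap[of _ "seqs (NN L)"])
  qed
  also have "\<dots> \<le> (\<Sum>j\<in>{1..k}. (\<Prod>l\<in>{1..<j}. pp l) * beta j * Ew j C w) + (\<Prod>l\<in>{1..<k+1}. pp l) * Ew (k+1) C w"
    by (intro add_mono sum_mono stage final) auto
  finally show ?thesis .
qed

lemma Ew_01: "C \<in> CB \<Longrightarrow> w \<in> {1..M} \<Longrightarrow> 0 \<le> Ew j C w"
  unfolding Ew_def by (intro sum_nonneg mult_nonneg_nonneg chan_n_nonneg W_nonneg) auto

lemma tau_cw:
  assumes C: "C \<in> CB" and w: "w \<in> {1..M}"
  shows "(\<Sum>ys\<in>seqs (NN L). PPe (C,R0) w (NN L) ys * TauR ys) \<le>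
     real (NN 2) + (\<Sum>j\<in>{1..k}. real (NN (2*j+2) - NN (2*j)) * ((\<Prod>l\<in>{1..<j}. pp l) * (eps j + (1 - beta j) * Ew j C w)))"
proof -
  let ?u = "(C, R0)"
  have c: "length (fst ?u w) = S" using C_len[OF C w] by simp
  have phi_nonneg: "0 \<le> 1 - T l z" for l z using T01[of l z] by simp
  have stage: "(\<Sum>ys\<in>seqs (NN L). PPe ?u w (NN L) ys * ((\<Prod>l\<in>{1..<j}. 1 - T l (seg (2*l) ys)) * (1 - T j (seg (2*j) ys))))
      \<le> (\<Prod>l\<in>{1..<j}. pp l) * (eps j + (1 - beta j) * Ew j C w)" if j: "1 \<le> j" "j \<le> k" for j
  proof -
    have sj: "length (take (s j) (C w)) = s j" using c s_le_S[of j] j by simp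
    have A0: "(\<Sum>ys\<in>seqs (NN L). PPe ?u w (NN L) ys * ((\<Prod>l\<in>{1..<j}. 1 - T l (seg (2*l) ys)) *
            (\<lambda>x z. 1 - T j z) (Dcat j ys) (seg (2*j) ys)))
       \<le> (\<Prod>l\<in>{1..<j}. pp l) * (\<Sum>x\<in>seqs (s j). chan_n W (take (s j) (fst ?u w)) x *
          (\<Sum>z\<in>seqs (len (2*j)). chan_pow W (if decx j (fst ?u) x = w then xA else xR) z * (\<lambda>x z. 1 - T j z) x z))"
      by (rule Tstage[OF j c]) (use phi_nonneg phi_theta j in auto)
    have A: "(\<Sum>ys\<in>seqs (NN L). PPe ?u w (NN L) ys * ((\<Prod>l\<in>{1..<j}. 1 - T l (seg (2*l) ys)) * (1 - T j (seg (2*j) ys))))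
       \<le> (\<Prod>l\<in>{1..<j}. pp l) * (\<Sum>x\<in>seqs (s j). chan_n W (take (s j) (C w)) x *
          (\<Sum>z\<in>seqs (len (2*j)). chan_pow W (if decx j C x = w then xA else xR) z * (1 - T j z)))"
      using A0 by simp
    have inner: "(\<Sum>z\<in>seqs (len (2*j)). chan_pow W (if decx j C x = w then xA else xR) z * (1 - T j z))
          \<le> eps j + (1 - beta j) * (if decx j C x \<noteq> w then 1 else 0)" for x
    proof (cases "decx j C x = w")
      case True then show ?thesis using typeI[OF j] by simp
    next
      case False then show ?thesis using sum_R_compl[of j] eps_pos[OF j] by simp
    qed
    have pn: "0 \<le> (\<Prod>l\<in>{1..<j}. pp l)" using pp_nonneg j by (intro prod_nonneg) simp
    have B: "(\<Prod>l\<in>{1..<j}. pp l) * (\<Sum>x\<in>seqs (s j). chan_n W (take (s j) (C w)) x *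
          (\<Sum>z\<in>seqs (len (2*j)). chan_pow W (if decx j C x = w then xA else xR) z * (1 - T j z)))
       \<le> (\<Prod>l\<in>{1..<j}. pp l) * (\<Sum>x\<in>seqs (s j). chan_n W (take (s j) (C w)) x *
          (eps j + (1 - beta j) * (if decx j C x \<noteq> w then 1 else 0)))"
      by (rule mult_left_mono[OF sum_mono pn], rule mult_left_mono[OF inner chan_n_nonneg[OF W_nonneg]])
    have C1: "(\<Sum>x\<in>seqs (s j). chan_n W (take (s j) (C w)) x * (eps j + (1 - beta j) * (if decx j C x \<noteq> w then 1 else 0)))
         = (\<Sum>x\<in>seqs (s j). eps j * chan_n W (take (s j) (C w)) x + (1 - beta j) * (chan_n W (take (s j) (C w)) x * (if decx j C x \<noteq> w then 1 else 0)))"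
      by (intro sum.cong refl) (simp add: algebra_simps)
    have C2: "(\<Sum>x\<in>seqs (s j). eps j * chan_n W (take (s j) (C w)) x + (1 - beta j) * (chan_n W (take (s j) (C w)) x * (if decx j C x \<noteq> w then 1 else 0)))
        = eps j * (\<Sum>x\<in>seqs (s j). chan_n W (take (s j) (C w)) x) + (1 - beta j) * Ew j C w"
      unfolding Ew_def sum.distrib sum_distrib_left ..
    have C3: "(\<Sum>x\<in>seqs (s j). chan_n W (take (s j) (C w)) x) = 1"
      using sum_chan_n[of W, OF W_sum sj] .
    show ?thesis using A B C1 C2 C3 by simp
  qed
  have "(\<Sum>ys\<in>seqs (NN L). PPe ?u w (NN L) ys * TauR ys) =
     real (NN 2) * (\<Sum>ys\<in>seqs (NN L). PPe ?u w (NN L) ys) +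
     (\<Sum>j\<in>{1..k}. real (NN (2*j+2) - NN (2*j)) *
       (\<Sum>ys\<in>seqs (NN L). PPe ?u w (NN L) ys * ((\<Prod>l\<in>{1..<j}. 1 - T l (seg (2*l) ys)) * (1 - T j (seg (2*j) ys)))))"
  proof -
    have "(\<Sum>ys\<in>seqs (NN L). PPe ?u w (NN L) ys * TauR ys) =
     (\<Sum>ys\<in>seqs (NN L). real (NN 2) * PPe ?u w (NN L) ys) +
     (\<Sum>ys\<in>seqs (NN L). \<Sum>j\<in>{1..k}. real (NN (2*j+2) - NN (2*j)) *
       (PPe ?u w (NN L) ys * ((\<Prod>l\<in>{1..<j}. 1 - T l (seg (2*l) ys)) * (1 - T j (seg (2*j) ys)))))"
    proof -
      have "PPe ?u w (NN L) ys * TauR ys = real (NN 2) * PPe ?u w (NN L) ys +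
        (\<Sum>j\<in>{1..k}. real (NN (2*j+2) - NN (2*j)) *
         (PPe ?u w (NN L) ys * ((\<Prod>l\<in>{1..<j}. 1 - T l (seg (2*l) ys)) * (1 - T j (seg (2*j) ys)))))" for ys
        unfolding TauR_def by (simp add: distrib_left sum_distrib_left mult_ac)
      then show ?thesis by (simp add: sum.distrib)
    qed
    also have "\<dots> = real (NN 2) * (\<Sum>ys\<in>seqs (NN L). PPe ?u w (NN L) ys) +
     (\<Sum>j\<in>{1..k}. real (NN (2*j+2) - NN (2*j)) *
       (\<Sum>ys\<in>seqs (NN L). PPe ?u w (NN L) ys * ((\<Prod>l\<in>{1..<j}. 1 - T l (seg (2*l) ys)) * (1 - T j (seg (2*j) ys)))))"
      by (simp only: sum_distrib_left[of "real (NN 2)"] sum_distrib_left[of "real (NN (2*_+2) - NN (2*_))"]) (rule arg_cong2[where f="(+)"], rule refl, rule sum.swap)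
    finally show ?thesis .
  qed
  also have "\<dots> \<le> real (NN 2) + (\<Sum>j\<in>{1..k}. real (NN (2*j+2) - NN (2*j)) * ((\<Prod>l\<in>{1..<j}. pp l) * (eps j + (1 - beta j) * Ew j C w)))"
    unfolding PP_total by (intro add_mono sum_mono mult_left_mono stage) auto
  finally show ?thesis .
qed

end


context scheme_T
begin

definition Av :: "((nat \<Rightarrow> 'x list) \<Rightarrow> nat \<Rightarrow> real) \<Rightarrow> real" where
  "Av F = (\<Sum>C\<in>CB. PC C * (1 / real M * (\<Sum>w\<in>{1..M}. F C w)))"

lemma Av_mono: "(\<And>C w. C \<in> CB \<Longrightarrow> w \<in> {1..M} \<Longrightarrow> F C w \<le> G C w) \<Longrightarrow> Av F \<le> Av G"
  unfolding Av_def by (intro sum_mono mult_left_mono PC_nonneg) auto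

lemma Av_add: "Av (\<lambda>C w. F C w + G C w) = Av F + Av G"
  unfolding Av_def by (simp add: sum.distrib distrib_left)

lemma Av_cmult: "Av (\<lambda>C w. a * F C w) = a * Av F"
  unfolding Av_def by (simp add: sum_distrib_left mult_ac)

lemma Av_const: "Av (\<lambda>C w. a) = a"
  unfolding Av_def using M PC_sum by (simp add: sum_distrib_right[symmetric])

lemma Av_sum: "Av (\<lambda>C w. \<Sum>j\<in>J. F j C w) = (\<Sum>j\<in>J. Av (F j))"
  unfolding Av_def by (simp add: sum_distrib_left sum.swap[of _ J])

lemma Perr_Av: "Perr j = Av (Ew j)"
  unfolding Perr_def Av_def Ew_def ..

definition Phi_err :: "(nat \<Rightarrow> 'x list) \<Rightarrow> (nat \<times> 'y list \<Rightarrow> bool) \<Rightarrow> nat \<Rightarrow> 'y list \<Rightarrow> real" where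
  "Phi_err C R w ys = (\<Sum>j\<in>{1..k+1}. (if fstage R ys = j then 1 else 0) * Ei j C w ys)"

definition Phi_tau :: "(nat \<times> 'y list \<Rightarrow> bool) \<Rightarrow> 'y list \<Rightarrow> real" where
  "Phi_tau R ys = real (NN 2) + (\<Sum>j\<in>{1..k}. real (NN (2*j+2) - NN (2*j)) * (if j < fstage R ys then 1 else 0))"

lemma R_avg_err:
  assumes ys: "length ys = NN L"
  shows "(\<Sum>R\<in>RS. PR R * Phi_err C R w ys) = ErrR C w ys"
proof -
  have "(\<Sum>R\<in>RS. PR R * Phi_err C R w ys) = (\<Sum>j\<in>{1..k+1}. (\<Sum>R\<in>RS. PR R * (if fstage R ys = j then 1 else 0)) * Ei j C w ys)"
  proof -
    have "PR R * Phi_err C R w ys = (\<Sum>j\<in>{1..k+1}. (PR R * (if fstage R ys = j then 1 else 0)) * Ei j C w ys)" for R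
      unfolding Phi_err_def by (simp add: sum_distrib_left mult_ac)
    then have "(\<Sum>R\<in>RS. PR R * Phi_err C R w ys) = (\<Sum>R\<in>RS. \<Sum>j\<in>{1..k+1}. (PR R * (if fstage R ys = j then 1 else 0)) * Ei j C w ys)"
      by simp
    also have "\<dots> = (\<Sum>j\<in>{1..k+1}. \<Sum>R\<in>RS. (PR R * (if fstage R ys = j then 1 else 0)) * Ei j C w ys)"
      by (rule sum.swap)
    also have "\<dots> = (\<Sum>j\<in>{1..k+1}. (\<Sum>R\<in>RS. PR R * (if fstage R ys = j then 1 else 0)) * Ei j C w ys)"
      by (simp only: sum_distrib_right)
    finally show ?thesis .
  qed
  also have "{1..k+1} = insert (k+1) {1..k}" by auto
  also have "(\<Sum>j\<in>insert (k+1) {1..k}. (\<Sum>R\<in>RS. PR R * (if fstage R ys = j then 1 else 0)) * Ei j C w ys)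
     = (\<Sum>R\<in>RS. PR R * (if fstage R ys = k+1 then 1 else 0)) * Ei (k+1) C w ys +
       (\<Sum>j\<in>{1..k}. (\<Sum>R\<in>RS. PR R * (if fstage R ys = j then 1 else 0)) * Ei j C w ys)"
    by simp
  also have "\<dots> = ErrR C w ys"
    unfolding ErrR_def avg_last[OF ys] using avg_eq[OF ys] by simp
  finally show ?thesis .
qed

lemma R_avg_tau:
  assumes ys: "length ys = NN L"
  shows "(\<Sum>R\<in>RS. PR R * Phi_tau R ys) = TauR ys"
proof -
  have "(\<Sum>R\<in>RS. PR R * Phi_tau R ys) = real (NN 2) * (\<Sum>R\<in>RS. PR R) +
     (\<Sum>j\<in>{1..k}. real (NN (2*j+2) - NN (2*j)) * (\<Sum>R\<in>RS. PR R * (if j < fstage R ys then 1 else 0)))"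
  proof -
    have "PR R * Phi_tau R ys = real (NN 2) * PR R + (\<Sum>j\<in>{1..k}. real (NN (2*j+2) - NN (2*j)) * (PR R * (if j < fstage R ys then 1 else 0)))" for R
      unfolding Phi_tau_def by (simp add: distrib_left sum_distrib_left mult_ac)
    then have "(\<Sum>R\<in>RS. PR R * Phi_tau R ys) = (\<Sum>R\<in>RS. real (NN 2) * PR R) +
       (\<Sum>R\<in>RS. \<Sum>j\<in>{1..k}. real (NN (2*j+2) - NN (2*j)) * (PR R * (if j < fstage R ys then 1 else 0)))"
      by (simp add: sum.distrib)
    also have "\<dots> = real (NN 2) * (\<Sum>R\<in>RS. PR R) +
       (\<Sum>j\<in>{1..k}. real (NN (2*j+2) - NN (2*j)) * (\<Sum>R\<in>RS. PR R * (if j < fstage R ys then 1 else 0)))"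
      by (simp only: sum_distrib_left) (rule arg_cong2[where f="(+)"], rule refl, rule sum.swap)
    finally show ?thesis .
  qed
  also have "\<dots> = TauR ys"
    unfolding TauR_def PR_sum using avg_gt[OF ys] by simp
  finally show ?thesis .
qed

end


lemma swap3:
  fixes p :: "'r \<Rightarrow> real"
  shows "(\<Sum>R\<in>A. p R * (\<Sum>w\<in>B. \<Sum>y\<in>Cs. q w y * F R w y)) = (\<Sum>w\<in>B. \<Sum>y\<in>Cs. q w y * (\<Sum>R\<in>A. p R * F R w y))"
proof -
  have "(\<Sum>R\<in>A. p R * (\<Sum>w\<in>B. \<Sum>y\<in>Cs. q w y * F R w y)) = (\<Sum>R\<in>A. \<Sum>w\<in>B. \<Sum>y\<in>Cs. q w y * (p R * F R w y))"
    by (simp add: sum_distrib_left mult_ac)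
  also have "\<dots> = (\<Sum>w\<in>B. \<Sum>R\<in>A. \<Sum>y\<in>Cs. q w y * (p R * F R w y))" by (rule sum.swap)
  also have "\<dots> = (\<Sum>w\<in>B. \<Sum>y\<in>Cs. \<Sum>R\<in>A. q w y * (p R * F R w y))" by (simp only: sum.swap[of _ A])
  also have "\<dots> = (\<Sum>w\<in>B. \<Sum>y\<in>Cs. q w y * (\<Sum>R\<in>A. p R * F R w y))" by (simp only: sum_distrib_left)
  finally show ?thesis .
qed

lemma sum_prod_set: "(\<Sum>u\<in>A\<times>B. f u) = (\<Sum>x\<in>A. \<Sum>y\<in>B. f (x,y))"
  unfolding sum.cartesian_product by simp

context scheme_T
begin

definition U0 where "U0 = CB \<times> RS"

definition PU0 :: "(nat \<Rightarrow> 'x list) \<times> (nat \<times> 'y list \<Rightarrow> bool) \<Rightarrow> real" where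
  "PU0 u = PC (fst u) * PR (snd u)"

lemma U0_finite: "finite U0" unfolding U0_def using CB_finite RS_finite by simp

lemma PR_nonneg: "0 \<le> PR R"
  unfolding PR_def qR_def using T01 by (intro prod_nonneg) auto

lemma PU0_nonneg: "0 \<le> PU0 u" unfolding PU0_def using PC_nonneg PR_nonneg by simp

lemma PU0_sum: "(\<Sum>u\<in>U0. PU0 u) = 1"
  unfolding U0_def PU0_def sum_prod_set
  by (simp add: sum_distrib_left[symmetric] PR_sum PC_sum)

lemma pull_R:
  fixes Phi :: "(nat \<Rightarrow> 'x list) \<Rightarrow> (nat \<times> 'y list \<Rightarrow> bool) \<Rightarrow> nat \<Rightarrow> 'y list \<Rightarrow> real"
  assumes avg: "\<And>C w ys. length ys = NN L \<Longrightarrow> (\<Sum>R\<in>RS. PR R * Phi C R w ys) = Psi C w ys"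
  shows "(\<Sum>u\<in>U0. PU0 u * (1 / real M * (\<Sum>w\<in>{1..M}. \<Sum>ys\<in>seqs (NN L). PPe u w (NN L) ys * Phi (fst u) (snd u) w ys)))
    = Av (\<lambda>C w. \<Sum>ys\<in>seqs (NN L). PPe (C, R0) w (NN L) ys * Psi C w ys)"
proof -
  have "(\<Sum>u\<in>U0. PU0 u * (1 / real M * (\<Sum>w\<in>{1..M}. \<Sum>ys\<in>seqs (NN L). PPe u w (NN L) ys * Phi (fst u) (snd u) w ys)))
     = (\<Sum>C\<in>CB. \<Sum>R\<in>RS. PC C * (1 / real M) * (PR R * (\<Sum>w\<in>{1..M}. \<Sum>ys\<in>seqs (NN L). PPe (C,R0) w (NN L) ys * Phi C R w ys)))"
    unfolding U0_def sum_prod_set PU0_def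
  proof (intro sum.cong refl)
    fix C R
    have e: "PPe (C,R) w (NN L) ys = PPe (C,R0) w (NN L) ys" for w ys by (rule PPe_fst)
    show "PC (fst (C,R)) * PR (snd (C,R)) * (1 / real M * (\<Sum>w\<in>{1..M}. \<Sum>ys\<in>seqs (NN L). PPe (C,R) w (NN L) ys * Phi (fst (C,R)) (snd (C,R)) w ys))
      = PC C * (1 / real M) * (PR R * (\<Sum>w\<in>{1..M}. \<Sum>ys\<in>seqs (NN L). PPe (C,R0) w (NN L) ys * Phi C R w ys))"
      unfolding e by (simp add: mult_ac)
  qed
  also have "\<dots> = (\<Sum>C\<in>CB. PC C * (1 / real M) * (\<Sum>R\<in>RS. PR R * (\<Sum>w\<in>{1..M}. \<Sum>ys\<in>seqs (NN L). PPe (C,R0) w (NN L) ys * Phi C R w ys)))"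
    by (simp only: sum_distrib_left)
  also have "\<dots> = (\<Sum>C\<in>CB. PC C * (1 / real M) * (\<Sum>w\<in>{1..M}. \<Sum>ys\<in>seqs (NN L). PPe (C,R0) w (NN L) ys * (\<Sum>R\<in>RS. PR R * Phi C R w ys)))"
    by (simp only: swap3)
  also have "\<dots> = (\<Sum>C\<in>CB. PC C * (1 / real M) * (\<Sum>w\<in>{1..M}. \<Sum>ys\<in>seqs (NN L). PPe (C,R0) w (NN L) ys * Psi C w ys))"
    using avg by (intro sum.cong refl arg_cong2[where f="(*)"]) auto
  also have "\<dots> = Av (\<lambda>C w. \<Sum>ys\<in>seqs (NN L). PPe (C, R0) w (NN L) ys * Psi C w ys)"
    unfolding Av_def by (simp add: mult_ac)
  finally show ?thesis .
qed

lemma total_err: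
  "(\<Sum>u\<in>U0. PU0 u * (1 / real M * (\<Sum>w\<in>{1..M}. \<Sum>ys\<in>seqs (NN L). PPe u w (NN L) ys * Phi_err (fst u) (snd u) w ys)))
   \<le> (\<Sum>j\<in>{1..k}. rcu W PX (s j) M * beta j * (\<Prod>l\<in>{1..<j}. pp l)) + rcu W PX (s (k+1)) M * (\<Prod>l\<in>{1..<k+1}. pp l)"
proof -
  have pn: "0 \<le> (\<Prod>l\<in>{1..<j}. pp l)" if "j \<le> k+1" for j using pp_nonneg that by (intro prod_nonneg) simp
  have "(\<Sum>u\<in>U0. PU0 u * (1 / real M * (\<Sum>w\<in>{1..M}. \<Sum>ys\<in>seqs (NN L). PPe u w (NN L) ys * Phi_err (fst u) (snd u) w ys)))
     = Av (\<lambda>C w. \<Sum>ys\<in>seqs (NN L). PPe (C, R0) w (NN L) ys * ErrR C w ys)"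
    by (rule pull_R) (rule R_avg_err)
  also have "\<dots> \<le> Av (\<lambda>C w. (\<Sum>j\<in>{1..k}. (\<Prod>l\<in>{1..<j}. pp l) * beta j * Ew j C w) + (\<Prod>l\<in>{1..<k+1}. pp l) * Ew (k+1) C w)"
    by (rule Av_mono) (rule err_cw)
  also have "\<dots> = (\<Sum>j\<in>{1..k}. (\<Prod>l\<in>{1..<j}. pp l) * beta j * Perr j) + (\<Prod>l\<in>{1..<k+1}. pp l) * Perr (k+1)"
    unfolding Av_add Av_sum Perr_Av by (simp add: Av_cmult mult.assoc)
  also have "\<dots> \<le> (\<Sum>j\<in>{1..k}. (\<Prod>l\<in>{1..<j}. pp l) * beta j * rcu W PX (s j) M) + (\<Prod>l\<in>{1..<k+1}. pp l) * rcu W PX (s (k+1)) M"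
    by (intro add_mono sum_mono mult_left_mono Perr_le mult_nonneg_nonneg pn beta_01) auto
  finally show ?thesis by (simp add: mult_ac)
qed

lemma total_tau:
  "(\<Sum>u\<in>U0. PU0 u * (1 / real M * (\<Sum>w\<in>{1..M}. \<Sum>ys\<in>seqs (NN L). PPe u w (NN L) ys * (\<lambda>C R w ys. Phi_tau R ys) (fst u) (snd u) w ys)))
   \<le> real (NN 2) + (\<Sum>j\<in>{1..k}. real (NN (2*j+2) - NN (2*j)) * (rcu W PX (s j) M * (1 - beta j) + eps j) * (\<Prod>l\<in>{1..<j}. pp l))"
proof -
  have pn: "0 \<le> (\<Prod>l\<in>{1..<j}. pp l)" if "j \<le> k+1" for j using pp_nonneg that by (intro prod_nonneg) simp
  have "(\<Sum>u\<in>U0. PU0 u * (1 / real M * (\<Sum>w\<in>{1..M}. \<Sum>ys\<in>seqs (NN L). PPe u w (NN L) ys * (\<lambda>C R w ys. Phi_tau R ys) (fst u) (snd u) w ys)))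
     = Av (\<lambda>C w. \<Sum>ys\<in>seqs (NN L). PPe (C, R0) w (NN L) ys * (\<lambda>C w ys. TauR ys) C w ys)"
    by (rule pull_R) (simp add: R_avg_tau)
  also have "\<dots> \<le> Av (\<lambda>C w. real (NN 2) + (\<Sum>j\<in>{1..k}. real (NN (2*j+2) - NN (2*j)) * ((\<Prod>l\<in>{1..<j}. pp l) * (eps j + (1 - beta j) * Ew j C w))))"
  proof (rule Av_mono)
    fix C w assume "C \<in> CB" "w \<in> {1..M}"
    then show "(\<Sum>ys\<in>seqs (NN L). PPe (C, R0) w (NN L) ys * TauR ys) \<le> real (NN 2) + (\<Sum>j\<in>{1..k}. real (NN (2*j+2) - NN (2*j)) * ((\<Prod>l\<in>{1..<j}. pp l) * (eps j + (1 - beta j) * Ew j C w)))"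
      by (rule tau_cw)
  qed
  also have "\<dots> = real (NN 2) + (\<Sum>j\<in>{1..k}. real (NN (2*j+2) - NN (2*j)) * ((\<Prod>l\<in>{1..<j}. pp l) * (eps j + (1 - beta j) * Perr j)))"
    unfolding Av_add Av_sum Perr_Av Av_const distrib_left by (simp add: Av_cmult Av_add Av_const mult.assoc)
  also have "\<dots> \<le> real (NN 2) + (\<Sum>j\<in>{1..k}. real (NN (2*j+2) - NN (2*j)) * ((\<Prod>l\<in>{1..<j}. pp l) * (eps j + (1 - beta j) * rcu W PX (s j) M)))"
    by (intro add_mono sum_mono mult_left_mono Perr_le mult_nonneg_nonneg pn beta_01) (auto simp: beta_01)
  finally show ?thesis by (simp add: mult_ac add_ac)
qed

end


lemma test_exists:
  fixes A :: "'a set" and PA PR :: "'a \<Rightarrow> real" and eps :: real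
  assumes fin: "finite A" and PR: "\<And>a. 0 \<le> PR a" and eps: "0 \<le> eps"
  shows "\<exists>T. (\<forall>a. 0 \<le> T a \<and> T a \<le> 1) \<and> (\<Sum>a\<in>A. PA a * (1 - T a)) \<le> eps \<and>
            (\<Sum>a\<in>A. PR a * T a) = hyp_beta A eps PA PR"
proof -
  define feas where "feas T \<longleftrightarrow> (\<forall>a\<in>A. 0 \<le> T a \<and> T a \<le> 1) \<and> (\<Sum>a\<in>A. PA a * (1 - T a)) \<le> eps" for T :: "'a \<Rightarrow> real"
  define Sset where "Sset = {(\<Sum>a\<in>A. PR a * T a) | T. feas T}"
  have hb: "hyp_beta A eps PA PR = Inf Sset" unfolding hyp_beta_def Sset_def feas_def by simp
  have ne: "Sset \<noteq> {}"
  proof -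
    have "feas (\<lambda>_. 1)" unfolding feas_def using eps by simp
    then show ?thesis unfolding Sset_def by blast
  qed
  have lb: "0 \<le> x" if "x \<in> Sset" for x
    using that PR unfolding Sset_def feas_def by (auto intro!: sum_nonneg mult_nonneg_nonneg)
  have bdd: "bdd_below Sset" using lb unfolding bdd_below_def by blast
  define \<beta> where "\<beta> = Inf Sset"
  have approx: "\<exists>T. feas T \<and> (\<Sum>a\<in>A. PR a * T a) < \<beta> + inverse (real (Suc m))" for m :: nat
  proof -
    have "Inf Sset < \<beta> + inverse (real (Suc m))" unfolding \<beta>_def by simp
    then obtain x where "x \<in> Sset" "x < \<beta> + inverse (real (Suc m))" using cInf_lessD[OF ne] by blast
    then show ?thesis unfolding Sset_def by blast
  qed
  then have "\<forall>m. \<exists>T. feas T \<and> (\<Sum>a\<in>A. PR a * T a) < \<beta> + inverse (real (Suc m))" by blast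
  from choice[OF this] obtain Tm where Tm0: "\<forall>m. feas (Tm m) \<and> (\<Sum>a\<in>A. PR a * Tm m a) < \<beta> + inverse (real (Suc m))"
    by blast
  then have Tm: "\<And>m. feas (Tm m)" "\<And>m. (\<Sum>a\<in>A. PR a * Tm m a) < \<beta> + inverse (real (Suc m))" by auto
  have Tm_ge: "\<beta> \<le> (\<Sum>a\<in>A. PR a * Tm m a)" for m
    unfolding \<beta>_def by (rule cInf_lower[OF _ bdd]) (use Tm(1) in \<open>auto simp: Sset_def\<close>)
  define f where "f m = (\<lambda>a. if a \<in> A then Tm m a else 0)" for m
  have f01: "0 \<le> f m a \<and> f m a \<le> 1" for m a using Tm(1)[of m] unfolding f_def feas_def by auto
  have "\<forall>\<delta>\<subseteq>A. \<exists>l::'a\<Rightarrow>real. \<exists>r::nat\<Rightarrow>nat. strict_mono r \<and>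
      (\<forall>e>0. eventually (\<lambda>n. \<forall>i\<in>\<delta>. dist (f (r n) i) (l i) < e) sequentially)"
  proof (rule compact_lemma_general[where proj="\<lambda>x k. x k" and unproj="\<lambda>e. e"])
    show "finite A" by fact
    fix k assume "k \<in> A"
    show "bounded ((\<lambda>x. x k) ` range f)"
      unfolding bounded_iff using f01 by (intro exI[of _ 1]) auto
  qed auto
  then obtain l r where r: "strict_mono r" and conv: "\<And>e. e > 0 \<Longrightarrow> eventually (\<lambda>n. \<forall>i\<in>A. dist (f (r n) i) (l i) < e) sequentially"
    by blast
  have lim: "(\<lambda>n. f (r n) i) \<longlonglongrightarrow> l i" if "i \<in> A" for i
    unfolding tendsto_iff
  proof (intro allI impI)
    fix e :: real assume "e > 0"
    from conv[OF this] show "eventually (\<lambda>n. dist (f (r n) i) (l i) < e) sequentially"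
      by (rule eventually_mono) (use that in blast)
  qed
  define T where "T a = (if a \<in> A then l a else 0)" for a
  have T01: "0 \<le> T a \<and> T a \<le> 1" for a
  proof (cases "a \<in> A")
    case True
    have "0 \<le> l a" using f01 by (intro LIMSEQ_le_const[OF lim[OF True]]) auto
    moreover have "l a \<le> 1" using f01 by (intro LIMSEQ_le_const2[OF lim[OF True]]) auto
    ultimately show ?thesis using True unfolding T_def by simp
  qed (simp add: T_def)
  have f_eq: "f m a = Tm m a" if "a \<in> A" for m a using that unfolding f_def by simp
  have limA: "(\<lambda>n. \<Sum>a\<in>A. PA a * (1 - Tm (r n) a)) \<longlonglongrightarrow> (\<Sum>a\<in>A. PA a * (1 - T a))"
  proof -
    have "(\<lambda>n. \<Sum>a\<in>A. PA a * (1 - f (r n) a)) \<longlonglongrightarrow> (\<Sum>a\<in>A. PA a * (1 - l a))"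
      by (intro tendsto_intros lim) auto
    moreover have "(\<Sum>a\<in>A. PA a * (1 - f (r n) a)) = (\<Sum>a\<in>A. PA a * (1 - Tm (r n) a))" for n
      using f_eq by (intro sum.cong) auto
    moreover have "(\<Sum>a\<in>A. PA a * (1 - l a)) = (\<Sum>a\<in>A. PA a * (1 - T a))"
      unfolding T_def by (intro sum.cong) auto
    ultimately show ?thesis by simp
  qed
  have limR: "(\<lambda>n. \<Sum>a\<in>A. PR a * Tm (r n) a) \<longlonglongrightarrow> (\<Sum>a\<in>A. PR a * T a)"
  proof -
    have "(\<lambda>n. \<Sum>a\<in>A. PR a * f (r n) a) \<longlonglongrightarrow> (\<Sum>a\<in>A. PR a * l a)"
      by (intro tendsto_intros lim) auto
    moreover have "(\<Sum>a\<in>A. PR a * f (r n) a) = (\<Sum>a\<in>A. PR a * Tm (r n) a)" for n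
      using f_eq by (intro sum.cong) auto
    moreover have "(\<Sum>a\<in>A. PR a * l a) = (\<Sum>a\<in>A. PR a * T a)"
      unfolding T_def by (intro sum.cong) auto
    ultimately show ?thesis by simp
  qed
  have typeI: "(\<Sum>a\<in>A. PA a * (1 - T a)) \<le> eps"
    using Tm(1) unfolding feas_def by (intro LIMSEQ_le_const2[OF limA]) auto
  have limB: "(\<lambda>n. \<Sum>a\<in>A. PR a * Tm (r n) a) \<longlonglongrightarrow> \<beta>"
  proof (rule tendsto_sandwich[where f="\<lambda>_. \<beta>" and h="\<lambda>n. \<beta> + inverse (real (Suc (r n)))"])
    show "eventually (\<lambda>n. \<beta> \<le> (\<Sum>a\<in>A. PR a * Tm (r n) a)) sequentially" using Tm_ge by simp
    show "eventually (\<lambda>n. (\<Sum>a\<in>A. PR a * Tm (r n) a) \<le> \<beta> + inverse (real (Suc (r n)))) sequentially"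
      using Tm(2) by (intro always_eventually allI less_imp_le)
    show "(\<lambda>_. \<beta>) \<longlonglongrightarrow> \<beta>" by simp
    have "(\<lambda>n. inverse (real (Suc (r n)))) \<longlonglongrightarrow> 0"
      using LIMSEQ_subseq_LIMSEQ[OF LIMSEQ_inverse_real_of_nat r] unfolding o_def .
    from tendsto_add[OF tendsto_const this, of \<beta>]
    show "(\<lambda>n. \<beta> + inverse (real (Suc (r n)))) \<longlonglongrightarrow> \<beta>" by simp
  qed
  have "(\<Sum>a\<in>A. PR a * T a) = \<beta>" using LIMSEQ_unique[OF limR limB] .
  then have eqb: "(\<Sum>a\<in>A. PR a * T a) = hyp_beta A eps PA PR" unfolding hb \<beta>_def .
  show ?thesis
    by (rule exI[of _ T], intro conjI allI T01 typeI eqb)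
qed


context scheme_T
begin

lemma joint_eq:
  "joint_prob W L n M (\<lambda>u. PU0 (h u)) (\<lambda>tm u w p. enc tm (h u) w p) u w ys = PU0 (h u) * (1 / real M) * PPe (h u) w (NN L) ys"
  unfolding joint_prob_def enc_in_def PP_def NN_L ..

lemma code_tau:
  assumes h: "bij_betw h {0..<N} U0"
  shows "exp_tau W L n M {0..<N} (\<lambda>u. PU0 (h u)) (\<lambda>tm u w p. enc tm (h u) w p) (\<lambda>i u p. stp i (h u) p) =
    (\<Sum>v\<in>U0. PU0 v * (1 / real M * (\<Sum>w\<in>{1..M}. \<Sum>ys\<in>seqs (NN L). PPe v w (NN L) ys * (\<lambda>C R w ys. Phi_tau R ys) (fst v) (snd v) w ys)))"
proof -
  have "exp_tau W L n M {0..<N} (\<lambda>u. PU0 (h u)) (\<lambda>tm u w p. enc tm (h u) w p) (\<lambda>i u p. stp i (h u) p) =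
    (\<Sum>u\<in>{0..<N}. (\<lambda>v. PU0 v * (1 / real M * (\<Sum>w\<in>{1..M}. \<Sum>ys\<in>seqs (NN L). PPe v w (NN L) ys * (\<lambda>C R w ys. Phi_tau R ys) (fst v) (snd v) w ys))) (h u))"
    unfolding exp_tau_def
  proof (intro sum.cong refl)
    fix u assume "u \<in> {0..<N}"
    have "(\<Sum>w\<in>{1..M}. \<Sum>ys\<in>seqs (n L). joint_prob W L n M (\<lambda>u. PU0 (h u)) (\<lambda>tm u w p. enc tm (h u) w p) u w ys *
            real (n (stop_idx L n (\<lambda>i u p. stp i (h u) p) u ys)))
        = (\<Sum>w\<in>{1..M}. \<Sum>ys\<in>seqs (NN L). PU0 (h u) * ((1 / real M) * (PPe (h u) w (NN L) ys * Phi_tau (snd (h u)) ys)))"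
    proof (intro sum.cong refl)
      fix w and ys :: "'y list" assume ys: "ys \<in> seqs (NN L)"
      have "real (n (stop_idx L n (\<lambda>i u p. stp i (h u) p) u ys)) = Phi_tau (snd (h u)) ys"
        unfolding Phi_tau_def
        by (rule tau_path[where C="fst (h u)"]) (use ys in auto)
      then show "joint_prob W L n M (\<lambda>u. PU0 (h u)) (\<lambda>tm u w p. enc tm (h u) w p) u w ys *
            real (n (stop_idx L n (\<lambda>i u p. stp i (h u) p) u ys)) =
           PU0 (h u) * ((1 / real M) * (PPe (h u) w (NN L) ys * Phi_tau (snd (h u)) ys))"
        unfolding joint_eq by (simp add: mult_ac)
    qed (simp add: NN_L)
    then show "(\<Sum>w\<in>{1..M}. \<Sum>ys\<in>seqs (n L). joint_prob W L n M (\<lambda>u. PU0 (h u)) (\<lambda>tm u w p. enc tm (h u) w p) u w ys *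
            real (n (stop_idx L n (\<lambda>i u p. stp i (h u) p) u ys))) =
        (\<lambda>v. PU0 v * (1 / real M * (\<Sum>w\<in>{1..M}. \<Sum>ys\<in>seqs (NN L). PPe v w (NN L) ys * (\<lambda>C R w ys. Phi_tau R ys) (fst v) (snd v) w ys))) (h u)"
      by (simp add: sum_distrib_left)
  qed
  also have "\<dots> = (\<Sum>v\<in>U0. PU0 v * (1 / real M * (\<Sum>w\<in>{1..M}. \<Sum>ys\<in>seqs (NN L). PPe v w (NN L) ys * (\<lambda>C R w ys. Phi_tau R ys) (fst v) (snd v) w ys)))"
    by (rule sum.reindex_bij_betw[OF h])
  finally show ?thesis .
qed

lemma code_err:
  assumes h: "bij_betw h {0..<N} U0"
  shows "err_prob W L n M {0..<N} (\<lambda>u. PU0 (h u)) (\<lambda>tm u w p. enc tm (h u) w p) (\<lambda>i u p. stp i (h u) p) (\<lambda>i u p. gdec i (h u) p) =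
    (\<Sum>v\<in>U0. PU0 v * (1 / real M * (\<Sum>w\<in>{1..M}. \<Sum>ys\<in>seqs (NN L). PPe v w (NN L) ys * Phi_err (fst v) (snd v) w ys)))"
proof -
  have "err_prob W L n M {0..<N} (\<lambda>u. PU0 (h u)) (\<lambda>tm u w p. enc tm (h u) w p) (\<lambda>i u p. stp i (h u) p) (\<lambda>i u p. gdec i (h u) p) =
    (\<Sum>u\<in>{0..<N}. (\<lambda>v. PU0 v * (1 / real M * (\<Sum>w\<in>{1..M}. \<Sum>ys\<in>seqs (NN L). PPe v w (NN L) ys * Phi_err (fst v) (snd v) w ys))) (h u))"
    unfolding err_prob_def
  proof (intro sum.cong refl)
    fix u assume "u \<in> {0..<N}"
    have "(\<Sum>w\<in>{1..M}. \<Sum>ys\<in>seqs (n L). joint_prob W L n M (\<lambda>u. PU0 (h u)) (\<lambda>tm u w p. enc tm (h u) w p) u w ys *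
            (let i = stop_idx L n (\<lambda>i u p. stp i (h u) p) u ys in if gdec i (h u) (take (n i) ys) \<noteq> w then 1 else 0))
        = (\<Sum>w\<in>{1..M}. \<Sum>ys\<in>seqs (NN L). PU0 (h u) * ((1 / real M) * (PPe (h u) w (NN L) ys * Phi_err (fst (h u)) (snd (h u)) w ys)))"
    proof (intro sum.cong refl)
      fix w and ys :: "'y list" assume ys: "ys \<in> seqs (NN L)"
      have "(let i = stop_idx L n (\<lambda>i u p. stp i (h u) p) u ys in if gdec i (h u) (take (n i) ys) \<noteq> w then 1 else 0::real)
          = Phi_err (fst (h u)) (snd (h u)) w ys"
        unfolding Phi_err_def Ei_def
        by (rule err_path[where C="fst (h u)" and st="\<lambda>i u p. stp i (h u) p" and gg="\<lambda>i u p. gdec i (h u) p"]) (use ys in auto)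
      then show "joint_prob W L n M (\<lambda>u. PU0 (h u)) (\<lambda>tm u w p. enc tm (h u) w p) u w ys *
            (let i = stop_idx L n (\<lambda>i u p. stp i (h u) p) u ys in if gdec i (h u) (take (n i) ys) \<noteq> w then 1 else 0) =
           PU0 (h u) * ((1 / real M) * (PPe (h u) w (NN L) ys * Phi_err (fst (h u)) (snd (h u)) w ys))"
        unfolding joint_eq by (simp add: mult_ac)
    qed (simp add: NN_L)
    then show "(\<Sum>w\<in>{1..M}. \<Sum>ys\<in>seqs (n L). joint_prob W L n M (\<lambda>u. PU0 (h u)) (\<lambda>tm u w p. enc tm (h u) w p) u w ys *
            (let i = stop_idx L n (\<lambda>i u p. stp i (h u) p) u ys in if gdec i (h u) (take (n i) ys) \<noteq> w then 1 else 0)) =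
        (\<lambda>v. PU0 v * (1 / real M * (\<Sum>w\<in>{1..M}. \<Sum>ys\<in>seqs (NN L). PPe v w (NN L) ys * Phi_err (fst v) (snd v) w ys))) (h u)"
      by (simp add: sum_distrib_left)
  qed
  also have "\<dots> = (\<Sum>v\<in>U0. PU0 v * (1 / real M * (\<Sum>w\<in>{1..M}. \<Sum>ys\<in>seqs (NN L). PPe v w (NN L) ys * Phi_err (fst v) (snd v) w ys)))"
    by (rule sum.reindex_bij_betw[OF h])
  finally show ?thesis .
qed

lemma code_valid:
  assumes h: "bij_betw h {0..<N} U0"
  shows "vlbf_valid L n M {0..<N} (\<lambda>u. PU0 (h u)) (\<lambda>i u p. gdec i (h u) p)"
proof -
  have "(\<Sum>u\<in>{0..<N}. PU0 (h u)) = (\<Sum>v\<in>U0. PU0 v)" by (rule sum.reindex_bij_betw[OF h])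
  then show ?thesis unfolding vlbf_valid_def
    using PU0_nonneg PU0_sum decx_in by (auto simp: gdec_def dec_def)
qed

end


context scheme_T
begin

abbreviation HB where "HB i \<equiv> hyp_beta (seqs (NN (2*i) - NN (2*i - 1))) (eps i) (chan_pow W xA) (chan_pow W xR)"
abbreviation PS where "PS i \<equiv> (if i = 0 then 1 else max (eps i) (1 - HB i))"
abbreviation SS where "SS j \<equiv> (\<Sum>i = 1..j. NN (2*i - 1) - NN (2*i - 2))"

lemma bound_eqs:
  assumes hyp: "\<And>i. 1 \<le> i \<Longrightarrow> i \<le> k \<Longrightarrow> HB i = beta i"
  shows "real (NN 2) + (\<Sum>j\<in>{1..k}. real (NN (2*j+2) - NN (2*j)) * (rcu W PX (s j) M * (1 - beta j) + eps j) * (\<Prod>l\<in>{1..<j}. pp l))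
     = real (NN 2) + (\<Sum>j = 1..(L - 1) div 2. real (NN (2*j+2) - NN (2*j)) * (rcu W PX (SS j) M * (1 - HB j) + eps j) * (\<Prod>i = 0..<j. PS i))"
    and "(\<Sum>j\<in>{1..k}. rcu W PX (s j) M * beta j * (\<Prod>l\<in>{1..<j}. pp l)) + rcu W PX (s (k+1)) M * (\<Prod>l\<in>{1..<k+1}. pp l)
     = (\<Sum>j = 1..(L - 1) div 2. rcu W PX (SS j) M * HB j * (\<Prod>i = 0..<j. PS i)) + rcu W PX (SS ((L - 1) div 2 + 1)) M * (\<Prod>i = 0..(L - 1) div 2. PS i)"
proof -
  have ss: "SS j = s j" for j unfolding s_def ..
  have prodeq: "(\<Prod>i\<in>insert 0 {1..<j}. PS i) = (\<Prod>l\<in>{1..<j}. pp l)" if "j \<le> k+1" for j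
  proof -
    have "(\<Prod>i\<in>insert 0 {1..<j}. PS i) = PS 0 * (\<Prod>i\<in>{1..<j}. PS i)" by (subst prod.insert) auto
    also have "\<dots> = (\<Prod>l\<in>{1..<j}. pp l)"
      using hyp that by (auto simp: pp_def intro!: prod.cong)
    finally show ?thesis .
  qed
  have p1: "(\<Prod>i = 0..<j. PS i) = (\<Prod>l\<in>{1..<j}. pp l)" if "1 \<le> j" "j \<le> k+1" for j
  proof -
    have "{0..<j} = insert 0 {1..<j}" using that by auto
    then show ?thesis using prodeq[OF that(2)] by simp
  qed
  have p2: "(\<Prod>i = 0..k. PS i) = (\<Prod>l\<in>{1..<k+1}. pp l)"
  proof -
    have "{0..k} = insert 0 {1..<k+1}" by auto
    then show ?thesis using prodeq[of "k+1"] by simp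
  qed
  have kk: "(L - 1) div 2 = k" unfolding k_def ..
  show "real (NN 2) + (\<Sum>j\<in>{1..k}. real (NN (2*j+2) - NN (2*j)) * (rcu W PX (s j) M * (1 - beta j) + eps j) * (\<Prod>l\<in>{1..<j}. pp l))
     = real (NN 2) + (\<Sum>j = 1..(L - 1) div 2. real (NN (2*j+2) - NN (2*j)) * (rcu W PX (SS j) M * (1 - HB j) + eps j) * (\<Prod>i = 0..<j. PS i))"
    unfolding kk ss
  proof (intro arg_cong2[where f="(+)"] refl sum.cong)
    fix j assume "j \<in> {1..k}"
    then have j: "1 \<le> j" "j \<le> k" "j \<le> k+1" by auto
    show "real (NN (2*j+2) - NN (2*j)) * (rcu W PX (s j) M * (1 - beta j) + eps j) * (\<Prod>l\<in>{1..<j}. pp l) =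
      real (NN (2*j+2) - NN (2*j)) * (rcu W PX (s j) M * (1 - HB j) + eps j) * (\<Prod>i = 0..<j. PS i)"
      by (simp only: hyp[OF j(1,2)] p1[OF j(1,3)])
  qed
  show "(\<Sum>j\<in>{1..k}. rcu W PX (s j) M * beta j * (\<Prod>l\<in>{1..<j}. pp l)) + rcu W PX (s (k+1)) M * (\<Prod>l\<in>{1..<k+1}. pp l)
     = (\<Sum>j = 1..(L - 1) div 2. rcu W PX (SS j) M * HB j * (\<Prod>i = 0..<j. PS i)) + rcu W PX (SS ((L - 1) div 2 + 1)) M * (\<Prod>i = 0..(L - 1) div 2. PS i)"
    unfolding kk ss p2
  proof (intro arg_cong2[where f="(+)"] refl sum.cong)
    fix j assume "j \<in> {1..k}"
    then have j: "1 \<le> j" "j \<le> k" "j \<le> k+1" by auto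
    show "rcu W PX (s j) M * beta j * (\<Prod>l\<in>{1..<j}. pp l) = rcu W PX (s j) M * HB j * (\<Prod>i = 0..<j. PS i)"
      by (simp only: hyp[OF j(1,2)] p1[OF j(1,3)])
  qed
qed

end

theorem theorem1:
  fixes W :: "'x::finite \<Rightarrow> 'y::finite \<Rightarrow> real"
    and PX :: "'x \<Rightarrow> real"
    and xA xR :: 'x
    and L M :: nat
    and n :: "nat \<Rightarrow> nat"
    and eps :: "nat \<Rightarrow> real"
  assumes L: "odd L" "L \<ge> 3"
    and W_nonneg: "\<And>x y. 0 \<le> W x y"
    and W_sum: "\<And>x. (\<Sum>y\<in>UNIV. W x y) = 1"
    and PX_nonneg: "\<And>x. 0 \<le> PX x"
    and PX_sum: "(\<Sum>x\<in>UNIV. PX x) = 1"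
    and M: "M \<ge> 1"
    and n_pos: "n 1 \<ge> 1"
    and n_mono: "\<And>i. 1 \<le> i \<Longrightarrow> i < L \<Longrightarrow> n i < n (Suc i)"
    and eps: "\<And>i. 1 \<le> i \<Longrightarrow> i \<le> (L - 1) div 2 \<Longrightarrow> 0 < eps i \<and> eps i < 1"
  shows
    "let k = (L - 1) div 2;
         nx = (\<lambda>i. if i = 0 then 0 else if i \<le> L then n i else n L);
         \<beta> = (\<lambda>i. hyp_beta (seqs (nx (2*i) - nx (2*i - 1))) (eps i)
                    (chan_pow W xA) (chan_pow W xR));
         p = (\<lambda>i. if i = 0 then 1 else max (eps i) (1 - \<beta> i));
         s = (\<lambda>j. \<Sum>i=1..j. nx (2*i - 1) - nx (2*i - 2));
         Nb = real (nx 2) + (\<Sum>j=1..k. real (nx (2*j + 2) - nx (2*j)) *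
                 (rcu W PX (s j) M * (1 - \<beta> j) + eps j) * (\<Prod>i=0..<j. p i));
         Eb = (\<Sum>j=1..k. rcu W PX (s j) M * \<beta> j * (\<Prod>i=0..<j. p i))
              + rcu W PX (s (k + 1)) M * (\<Prod>i=0..k. p i)
     in \<exists>(Us::nat set) PU (f :: nat \<Rightarrow> nat \<Rightarrow> nat \<Rightarrow> 'y list \<Rightarrow> 'x) stop g.
          is_vlbf_code W Nb L M Eb n Us PU f stop g"
proof -
  interpret S0: scheme W PX xA xR L M n eps "\<lambda>_ _. 0"
    by unfold_locales (use assms in auto)
  have "\<forall>i. \<exists>Ti. (\<forall>a. 0 \<le> Ti a \<and> Ti a \<le> 1) \<and> (1 \<le> i \<and> i \<le> S0.k \<longrightarrow>
      (\<Sum>a\<in>seqs (S0.len (2*i)). chan_pow W xA a * (1 - Ti a)) \<le> eps i \<and>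
      (\<Sum>a\<in>seqs (S0.len (2*i)). chan_pow W xR a * Ti a) = hyp_beta (seqs (S0.len (2*i))) (eps i) (chan_pow W xA) (chan_pow W xR))"
  proof
    fix i
    show "\<exists>Ti. (\<forall>a. 0 \<le> Ti a \<and> Ti a \<le> 1) \<and> (1 \<le> i \<and> i \<le> S0.k \<longrightarrow>
      (\<Sum>a\<in>seqs (S0.len (2*i)). chan_pow W xA a * (1 - Ti a)) \<le> eps i \<and>
      (\<Sum>a\<in>seqs (S0.len (2*i)). chan_pow W xR a * Ti a) = hyp_beta (seqs (S0.len (2*i))) (eps i) (chan_pow W xA) (chan_pow W xR))"
    proof (cases "1 \<le> i \<and> i \<le> S0.k")
      case True
      have "0 \<le> eps i" using eps[of i] True unfolding S0.k_def by auto
      have PRn: "\<And>a. 0 \<le> chan_pow W xR a" by (rule chan_pow_nonneg[OF W_nonneg])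
      from test_exists[where PR="chan_pow W xR" and PA="chan_pow W xA", OF seqs_finite[of "S0.len (2*i)"] PRn \<open>0 \<le> eps i\<close>]
      obtain Ti where Ti: "\<forall>a. 0 \<le> Ti a \<and> Ti a \<le> 1" "(\<Sum>a\<in>seqs (S0.len (2*i)). chan_pow W xA a * (1 - Ti a)) \<le> eps i"
        "(\<Sum>a\<in>seqs (S0.len (2*i)). chan_pow W xR a * Ti a) = hyp_beta (seqs (S0.len (2*i))) (eps i) (chan_pow W xA) (chan_pow W xR)"
        by (elim exE conjE) 
      show ?thesis by (rule exI[of _ Ti]) (simp only: Ti simp_thms)
    next
      case False
      show ?thesis by (rule exI[of _ "\<lambda>_. 0"]) (use False in auto)
    qed
  qed
  from choice[OF this] obtain T where T0: "\<forall>i. (\<forall>a. 0 \<le> T i a \<and> T i a \<le> 1) \<and> (1 \<le> i \<and> i \<le> S0.k \<longrightarrow>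
      (\<Sum>a\<in>seqs (S0.len (2*i)). chan_pow W xA a * (1 - T i a)) \<le> eps i \<and>
      (\<Sum>a\<in>seqs (S0.len (2*i)). chan_pow W xR a * T i a) = hyp_beta (seqs (S0.len (2*i))) (eps i) (chan_pow W xA) (chan_pow W xR))"
    by (elim exE) (rule that)
  have T: "\<And>i. (\<forall>a. 0 \<le> T i a \<and> T i a \<le> 1)"
    "\<And>i. 1 \<le> i \<Longrightarrow> i \<le> S0.k \<Longrightarrow> (\<Sum>a\<in>seqs (S0.len (2*i)). chan_pow W xA a * (1 - T i a)) \<le> eps i"
    "\<And>i. 1 \<le> i \<Longrightarrow> i \<le> S0.k \<Longrightarrow> (\<Sum>a\<in>seqs (S0.len (2*i)). chan_pow W xR a * T i a) = hyp_beta (seqs (S0.len (2*i))) (eps i) (chan_pow W xA) (chan_pow W xR)"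
    using T0 by simp_all
  interpret scheme_T W PX xA xR L M n eps T
  proof unfold_locales
    show "\<And>l z. 0 \<le> T l z \<and> T l z \<le> 1" using T(1) by blast
    show "\<And>l. 1 \<le> l \<Longrightarrow> l \<le> S0.k \<Longrightarrow> (\<Sum>z\<in>seqs (S0.len (2*l)). chan_pow W xA z * (1 - T l z)) \<le> eps l"
      using T(2) by blast
    show "\<And>l. 1 \<le> l \<Longrightarrow> l \<le> S0.k \<Longrightarrow> 0 \<le> eps l"
    proof -
      fix l assume "1 \<le> l" "l \<le> S0.k"
      then show "0 \<le> eps l" using eps[of l] unfolding S0.k_def by simp
    qed
  qed
  have hyp: "HB i = beta i" if "1 \<le> i" "i \<le> k" for i
    using T(3)[OF that] unfolding beta_def len_def by simp
  obtain h where h: "bij_betw h {0..<card U0} U0" using ex_bij_betw_nat_finite[OF U0_finite] by blast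
  have tau_le: "exp_tau W L n M {0..<card U0} (\<lambda>u. PU0 (h u)) (\<lambda>tm u w p. enc tm (h u) w p) (\<lambda>i u p. stp i (h u) p)
     \<le> real (NN 2) + (\<Sum>j = 1..(L - 1) div 2. real (NN (2*j+2) - NN (2*j)) * (rcu W PX (SS j) M * (1 - HB j) + eps j) * (\<Prod>i = 0..<j. PS i))"
    by (rule order_trans[OF eq_refl[OF code_tau[OF h]] order_trans[OF total_tau eq_refl[OF bound_eqs(1)[OF hyp]]]])
  have err_le: "err_prob W L n M {0..<card U0} (\<lambda>u. PU0 (h u)) (\<lambda>tm u w p. enc tm (h u) w p) (\<lambda>i u p. stp i (h u) p) (\<lambda>i u p. gdec i (h u) p)
     \<le> (\<Sum>j = 1..(L - 1) div 2. rcu W PX (SS j) M * HB j * (\<Prod>i = 0..<j. PS i)) + rcu W PX (SS ((L - 1) div 2 + 1)) M * (\<Prod>i = 0..(L - 1) div 2. PS i)"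
    by (rule order_trans[OF eq_refl[OF code_err[OF h]] order_trans[OF total_err eq_refl[OF bound_eqs(2)[OF hyp]]]])
  have valid: "vlbf_valid L n M {0..<card U0} (\<lambda>u. PU0 (h u)) (\<lambda>i u p. gdec i (h u) p)"
    by (rule code_valid[OF h])
  show ?thesis
    unfolding NN_def[symmetric] Let_def is_vlbf_code_def
    apply (rule exI[of _ "{0..<card U0}"], rule exI[of _ "\<lambda>u. PU0 (h u)"], rule exI[of _ "\<lambda>tm u w p. enc tm (h u) w p"],
        rule exI[of _ "\<lambda>i u p. stp i (h u) p"], rule exI[of _ "\<lambda>i u p. gdec i (h u) p"])
    using valid tau_le err_le by (intro conjI)
qed


end
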